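(* Let $P$ be a well-behaved set of vincular patterns and $n\ge1$. Let $\equiv$ be the equivalence relation on $S_n$ generated by the following rewriting rule. Whenever $\pi\in S_n$ contains an occurrence of some $\tau\in P$ with entries $x_1,\dots,x_k$ (appearing in this left-to-right order in $\pi$, in the same relative order as $\tau$), where the pair $x_ix_{i+1}$ matched to the underlined pair $\underline{k1}$ of $\tau$ occupies adjacent positions in $\pi$, then $\pi\equiv\pi'$, where $\pi'$ is obtained from $\pi$ by swapping the adjacent entries $x_i$ and $x_{i+1}$. Then: - $\equiv$ is a lattice congruence of the weak order on $S_n$; - every equivalence class of $\equiv$ contains exactly one permutation avoiding every pattern in $P$, and this permutation is the minimum of its class.
   Context: $S_n$ is the set of permutations of $[n]$ with the weak order (inclusion of inversion sets $\{(a_i,a_j):i<j,\ a_i>a_j\}$). A lattice congruence is an equivalence relation compatible with joins and meets. Vincular patterns. A vincular pattern is a permutation $\tau\in S_k$ with one underlined pair of consecutive entries. A permutation $\pi$ contains $\tau$ if it has a subsequence whose entries are in the same relative order as $\tau$ and in which the two entries matched to the underlined pair are at adjacent positions of $\pi$; otherwise $\pi$ avoids $\tau$. Well-behaved sets. A set $P$ of vincular patterns is well-behaved if each $\tau\in P$, of length $k\ge2$, has the form $\tau=A\,\underline{k1}\,B$ with $AB$ a permutation of $\{2,\dots,k-1\}$, and every pattern obtained from $\tau$ by permuting the entries within $A$ and within $B$ also lies in $P$. *)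

theory Defs
  imports Main "HOL-Combinatorics.List_Permutation"
begin

definition Sn :: "nat \<Rightarrow> nat list set" where
  "Sn n = {p. distinct p \<and> set p = {1..n}}"

definition inversions :: "nat list \<Rightarrow> (nat \<times> nat) set" where
  "inversions p = {(p ! i, p ! j) | i j. i < j \<and> j < length p \<and> p ! i > p ! j}"

definition weak_le :: "nat list \<Rightarrow> nat list \<Rightarrow> bool" where
  "weak_le p q \<longleftrightarrow> inversions p \<subseteq> inversions q"

definition is_join :: "nat \<Rightarrow> nat list \<Rightarrow> nat list \<Rightarrow> nat list \<Rightarrow> bool" where
  "is_join n j x y \<longleftrightarrow> j \<in> Sn n \<and> weak_le x j \<and> weak_le y j \<and>
     (\<forall>z\<in>Sn n. weak_le x z \<and> weak_le y z \<longrightarrow> weak_le j z)"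

definition is_meet :: "nat \<Rightarrow> nat list \<Rightarrow> nat list \<Rightarrow> nat list \<Rightarrow> bool" where
  "is_meet n m x y \<longleftrightarrow> m \<in> Sn n \<and> weak_le m x \<and> weak_le m y \<and>
     (\<forall>z\<in>Sn n. weak_le z x \<and> weak_le z y \<longrightarrow> weak_le z m)"

definition lattice_congruence :: "nat \<Rightarrow> (nat list \<Rightarrow> nat list \<Rightarrow> bool) \<Rightarrow> bool" where
  "lattice_congruence n R \<longleftrightarrow>
     (\<forall>x\<in>Sn n. R x x) \<and>
     (\<forall>x\<in>Sn n. \<forall>y\<in>Sn n. R x y \<longrightarrow> R y x) \<and>
     (\<forall>x\<in>Sn n. \<forall>y\<in>Sn n. \<forall>z\<in>Sn n. R x y \<and> R y z \<longrightarrow> R x z) \<and>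
     (\<forall>x\<in>Sn n. \<forall>y\<in>Sn n. \<forall>z\<in>Sn n. \<forall>j1 j2. R x y \<and> is_join n j1 x z \<and> is_join n j2 y z \<longrightarrow> R j1 j2) \<and>
     (\<forall>x\<in>Sn n. \<forall>y\<in>Sn n. \<forall>z\<in>Sn n. \<forall>m1 m2. R x y \<and> is_meet n m1 x z \<and> is_meet n m2 y z \<longrightarrow> R m1 m2)"

text \<open>A vincular pattern is a pair (tau, i): tau a permutation of [k] in one-line
  notation, and the underlined pair consists of the entries at positions i, i+1 (0-based).\<close>
type_synonym vpattern = "nat list \<times> nat"

definition occurrence :: "nat list \<Rightarrow> vpattern \<Rightarrow> (nat \<Rightarrow> nat) \<Rightarrow> bool" where
  "occurrence p tp idx \<longleftrightarrow> (let tau = fst tp; i = snd tp; k = length tau in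
     i + 1 < k \<and>
     (\<forall>a b. a < b \<and> b < k \<longrightarrow> idx a < idx b) \<and>
     (\<forall>a<k. idx a < length p) \<and>
     (\<forall>a<k. \<forall>b<k. p ! idx a < p ! idx b \<longleftrightarrow> tau ! a < tau ! b) \<and>
     idx (i + 1) = Suc (idx i))"

definition contains :: "nat list \<Rightarrow> vpattern \<Rightarrow> bool" where
  "contains p tp \<longleftrightarrow> (\<exists>idx. occurrence p tp idx)"

definition avoids :: "nat list \<Rightarrow> vpattern \<Rightarrow> bool" where
  "avoids p tp \<longleftrightarrow> \<not> contains p tp"

text \<open>Well-behaved sets: each (tau,i) has the form A k 1 B with underlined pair k1,
  AB a permutation of {2..k-1}, closed under permuting within A and within B.\<close>
definition well_behaved :: "vpattern set \<Rightarrow> bool" where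
  "well_behaved P \<longleftrightarrow> (\<forall>(tau, i)\<in>P.
     length tau \<ge> 2 \<and> i + 1 < length tau \<and>
     tau ! i = length tau \<and> tau ! (i + 1) = 1 \<and>
     distinct tau \<and> set tau = {1..length tau} \<and>
     (\<forall>A' B'. A' <~~> take i tau \<and> B' <~~> drop (i + 2) tau \<longrightarrow>
        (A' @ [length tau, 1] @ B', i) \<in> P))"

definition swap_adj :: "nat list \<Rightarrow> nat \<Rightarrow> nat list" where
  "swap_adj p j = p[j := p ! Suc j, Suc j := p ! j]"

definition rewrite_step :: "vpattern set \<Rightarrow> nat list \<Rightarrow> nat list \<Rightarrow> bool" where
  "rewrite_step P p q \<longleftrightarrow>
     (\<exists>tp\<in>P. \<exists>idx. occurrence p tp idx \<and> q = swap_adj p (idx (snd tp)))"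

text \<open>The equivalence relation generated by the rewriting rule (on lists; it preserves S_n).\<close>
definition pattern_equiv :: "vpattern set \<Rightarrow> nat list \<Rightarrow> nat list \<Rightarrow> bool" where
  "pattern_equiv P = (\<lambda>p q. rewrite_step P p q \<or> rewrite_step P q p)\<^sup>*\<^sup>*"

end

theory Submission
  imports Defs
begin

lemma length_swap_adj[simp]: "length (swap_adj p j) = length p"
  by (simp add: swap_adj_def)

lemma nth_swap_adj:
  assumes "Suc j < length p" "r < length p"
  shows "swap_adj p j ! r = (if r = j then p ! Suc j else if r = Suc j then p ! j else p ! r)"
  using assms by (auto simp: swap_adj_def nth_list_update)

lemma mset_swap_adj: "Suc j < length p \<Longrightarrow> mset (swap_adj p j) = mset p"
  unfolding swap_adj_def by (rule mset_swap) auto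

lemma distinct_swap_adj: "Suc j < length p \<Longrightarrow> distinct (swap_adj p j) = distinct p"
  by (metis mset_eq_imp_distinct_iff mset_swap_adj)

lemma set_swap_adj: "Suc j < length p \<Longrightarrow> set (swap_adj p j) = set p"
  by (metis mset_eq_setD mset_swap_adj)

lemma Sn_swap_adj: "p \<in> Sn n \<Longrightarrow> Suc j < length p \<Longrightarrow> swap_adj p j \<in> Sn n"
  by (simp add: Sn_def distinct_swap_adj set_swap_adj)

lemma Sn_length: "p \<in> Sn n \<Longrightarrow> length p = n"
  unfolding Sn_def using distinct_card by fastforce

lemma swap_adj_swap_adj: "Suc j < length p \<Longrightarrow> swap_adj (swap_adj p j) j = p"
  by (rule nth_equalityI) (auto simp: nth_swap_adj)

lemma swap_adj_comm:
  assumes "Suc j < length p" "Suc k < length p" "Suc j < k \<or> Suc k < j"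
  shows "swap_adj (swap_adj p j) k = swap_adj (swap_adj p k) j"
  using assms by (intro nth_equalityI) (auto simp: nth_swap_adj)

lemma swap_adj_braid:
  assumes "Suc (Suc m) < length p"
  shows "swap_adj (swap_adj (swap_adj p (Suc m)) m) (Suc m) = swap_adj (swap_adj (swap_adj p m) (Suc m)) m"
  using assms by (intro nth_equalityI) (auto simp: nth_swap_adj)

definition ix :: "nat list \<Rightarrow> nat \<Rightarrow> nat" where
  "ix p v = (THE i. i < length p \<and> p ! i = v)"

lemma ix_nth: "distinct p \<Longrightarrow> i < length p \<Longrightarrow> ix p (p ! i) = i"
  unfolding ix_def by (rule the_equality) (auto simp: nth_eq_iff_index_eq)

lemma ix_bound: "distinct p \<Longrightarrow> v \<in> set p \<Longrightarrow> ix p v < length p \<and> p ! ix p v = v"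
  by (metis in_set_conv_nth ix_nth)

lemma inv_ix: "distinct p \<Longrightarrow>
   (u, v) \<in> inversions p \<longleftrightarrow> u \<in> set p \<and> v \<in> set p \<and> v < u \<and> ix p u < ix p v"
proof
  assume d: "distinct p" and "(u, v) \<in> inversions p"
  then obtain i j where "i < j" "j < length p" "u = p ! i" "v = p ! j" "v < u"
    unfolding inversions_def by auto
  with d show "u \<in> set p \<and> v \<in> set p \<and> v < u \<and> ix p u < ix p v"
    by (auto simp: ix_nth)
next
  assume d: "distinct p" and h: "u \<in> set p \<and> v \<in> set p \<and> v < u \<and> ix p u < ix p v"
  then show "(u, v) \<in> inversions p"
  proof -
    have "p ! ix p u = u" "p ! ix p v = v" "ix p v < length p" using ix_bound[OF d] h by auto
    then show ?thesis unfolding inversions_def using h by force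
  qed
qed

lemma ix_swap:
  assumes d: "distinct p" and j: "Suc j < length p" and v: "v \<in> set p"
  shows "ix (swap_adj p j) v = (if v = p ! j then Suc j else if v = p ! Suc j then j else ix p v)"
proof -
  have d2: "distinct (swap_adj p j)" using d j by (simp add: distinct_swap_adj)
  obtain i where i: "i < length p" "p ! i = v" using ix_bound[OF d v] by blast
  have "ix p v = i" using i d ix_nth by blast
  show ?thesis
  proof (cases "i = j")
    case True
    then show ?thesis using ix_nth[OF d2, of "Suc j"] i j by (simp add: nth_swap_adj)
  next
    case f1: False
    show ?thesis
    proof (cases "i = Suc j")
      case True
      have "p ! j \<noteq> p ! Suc j" using d j by (simp add: nth_eq_iff_index_eq)
      then show ?thesis using ix_nth[OF d2, of j] i j d f1 True by (simp add: nth_swap_adj)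
    next
      case False
      then have "swap_adj p j ! i = v" using i j f1 by (simp add: nth_swap_adj)
      then have "ix (swap_adj p j) v = i" using ix_nth[OF d2, of i] i by simp
      moreover have "v \<noteq> p ! j" "v \<noteq> p ! Suc j" using i d f1 False j
        by (auto simp: nth_eq_iff_index_eq)
      ultimately show ?thesis using \<open>ix p v = i\<close> by simp
    qed
  qed
qed

lemma inversions_subset: "inversions p \<subseteq> set p \<times> set p"
  unfolding inversions_def by auto

lemma finite_inversions: "finite (inversions p)"
  by (rule finite_subset[OF inversions_subset]) auto

lemma inv_swap_desc:
  assumes d: "distinct p" and j: "Suc j < length p" and desc: "p ! Suc j < p ! j"
  shows "inversions (swap_adj p j) = inversions p - {(p ! j, p ! Suc j)}"
    and "(p ! j, p ! Suc j) \<in> inversions p"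
proof -
  have d2: "distinct (swap_adj p j)" using d j by (simp add: distinct_swap_adj)
  have s: "set (swap_adj p j) = set p" using j by (simp add: set_swap_adj)
  have ne: "p ! j \<noteq> p ! Suc j" using desc by simp
  have m1: "p ! j \<in> set p" "p ! Suc j \<in> set p" using j by auto
  have i1: "ix p (p ! j) = j" "ix p (p ! Suc j) = Suc j" using d j ix_nth by auto
  show "inversions (swap_adj p j) = inversions p - {(p ! j, p ! Suc j)}"
  proof (rule set_eqI, clarify)
    fix u v
    show "(u, v) \<in> inversions (swap_adj p j) \<longleftrightarrow> (u, v) \<in> inversions p - {(p ! j, p ! Suc j)}"
    proof (cases "u \<in> set p \<and> v \<in> set p")
      case False
      then show ?thesis unfolding Diff_iff inv_ix[OF d2] inv_ix[OF d] s by auto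
    next
      case True
      have oth: "x \<in> set p \<Longrightarrow> x \<noteq> p ! j \<Longrightarrow> x \<noteq> p ! Suc j \<Longrightarrow> ix p x \<noteq> j \<and> ix p x \<noteq> Suc j" for x
        using ix_bound[OF d, of x] by auto
      have iu: "ix (swap_adj p j) u = (if u = p ! j then Suc j else if u = p ! Suc j then j else ix p u)"
        using ix_swap[OF d j] True by blast
      have iv: "ix (swap_adj p j) v = (if v = p ! j then Suc j else if v = p ! Suc j then j else ix p v)"
        using ix_swap[OF d j] True by blast
      show ?thesis unfolding Diff_iff inv_ix[OF d2] inv_ix[OF d] s iu iv
        using True oth[of u] oth[of v] i1 ne desc by (auto split: if_splits)
    qed
  qed
  show "(p ! j, p ! Suc j) \<in> inversions p"
    unfolding inv_ix[OF d] using m1 i1 desc by simp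
qed

lemma inv_swap_asc:
  assumes d: "distinct p" and j: "Suc j < length p" and asc: "p ! j < p ! Suc j"
  shows "inversions (swap_adj p j) = insert (p ! Suc j, p ! j) (inversions p)"
    and "(p ! Suc j, p ! j) \<notin> inversions p"
proof -
  let ?q = "swap_adj p j"
  have dq: "distinct ?q" using d j by (simp add: distinct_swap_adj)
  have jq: "Suc j < length ?q" using j by simp
  have q1: "?q ! j = p ! Suc j" "?q ! Suc j = p ! j" using j by (auto simp: nth_swap_adj)
  have desc: "?q ! Suc j < ?q ! j" using q1 asc by simp
  note r = inv_swap_desc[OF dq jq desc]
  have e: "swap_adj ?q j = p" using j by (simp add: swap_adj_swap_adj)
  from r(1) r(2) show "inversions ?q = insert (p ! Suc j, p ! j) (inversions p)"
    unfolding e q1 by blast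
  from r(1) show "(p ! Suc j, p ! j) \<notin> inversions p" unfolding e q1 by blast
qed

lemma ix_inj: "distinct p \<Longrightarrow> u \<in> set p \<Longrightarrow> w \<in> set p \<Longrightarrow> ix p u = ix p w \<Longrightarrow> u = w"
  by (metis ix_bound)

lemma not_inv_order:
  assumes d: "distinct p" and "u \<in> set p" "w \<in> set p" "w < u" "(u, w) \<notin> inversions p"
  shows "ix p w < ix p u"
proof -
  have "\<not> ix p u < ix p w" using assms inv_ix[OF d] by auto
  moreover have "ix p u \<noteq> ix p w" using ix_inj[OF d, of u w] assms by auto
  ultimately show ?thesis by linarith
qed

lemma card_before:
  assumes d: "distinct p" and i: "i \<le> length p"
  shows "card {u \<in> set p. ix p u < i} = i"
proof -
  have "{u \<in> set p. ix p u < i} = (\<lambda>k. p ! k) ` {..<i}"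
  proof (rule set_eqI, rule iffI)
    fix u assume "u \<in> {u \<in> set p. ix p u < i}"
    then show "u \<in> (\<lambda>k. p ! k) ` {..<i}" using ix_bound[OF d, of u] by (auto intro!: image_eqI[of _ _ "ix p u"])
  next
    fix u assume "u \<in> (\<lambda>k. p ! k) ` {..<i}"
    then show "u \<in> {u \<in> set p. ix p u < i}" using i d by (auto simp: ix_nth)
  qed
  moreover have "inj_on (\<lambda>k. p ! k) {..<i}" using d i by (auto intro!: inj_onI simp: nth_eq_iff_index_eq)
  ultimately show ?thesis by (simp add: card_image)
qed

lemma ix_from_inv:
  assumes d: "distinct p" and v: "v \<in> set p"
  shows "ix p v = card {u \<in> set p. u \<noteq> v \<and> ((v < u \<and> (u, v) \<in> inversions p) \<or> (u < v \<and> (v, u) \<notin> inversions p))}"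
proof -
  have "{u \<in> set p. ix p u < ix p v} = {u \<in> set p. u \<noteq> v \<and> ((v < u \<and> (u, v) \<in> inversions p) \<or> (u < v \<and> (v, u) \<notin> inversions p))}"
  proof (rule Collect_cong)
    fix u
    show "(u \<in> set p \<and> ix p u < ix p v) = (u \<in> set p \<and> u \<noteq> v \<and> ((v < u \<and> (u, v) \<in> inversions p) \<or> (u < v \<and> (v, u) \<notin> inversions p)))"
    proof (cases "u \<in> set p \<and> u \<noteq> v")
      case True
      then have "ix p u \<noteq> ix p v" using ix_inj[OF d, of u v] v by blast
      then show ?thesis unfolding inv_ix[OF d] using True v by (cases "u < v") auto
    qed auto
  qed
  moreover have "card {u \<in> set p. ix p u < ix p v} = ix p v"
    using card_before[OF d] ix_bound[OF d v] by simp
  ultimately show ?thesis by simp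
qed

lemma inv_determines:
  assumes p: "p \<in> Sn n" and q: "q \<in> Sn n" and e: "inversions p = inversions q"
  shows "p = q"
proof -
  have dp: "distinct p" and dq: "distinct q" and sp: "set p = {1..n}" and sq: "set q = {1..n}"
    using p q by (auto simp: Sn_def)
  have ixe: "ix p v = ix q v" if "v \<in> {1..n}" for v
    using ix_from_inv[OF dp, of v] ix_from_inv[OF dq, of v] that sp sq e by simp
  have lp: "length p = n" and lq: "length q = n" using p q Sn_length by auto
  show ?thesis
  proof (rule nth_equalityI)
    show "length p = length q" using lp lq by simp
  next
    fix i assume i: "i < length p"
    let ?v = "p ! i"
    have v: "?v \<in> {1..n}" using i sp nth_mem by blast
    have "ix p ?v = i" using ix_nth[OF dp i] .
    then have "ix q ?v = i" using ixe[OF v] by simp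
    then show "p ! i = q ! i" using ix_bound[OF dq, of ?v] v sq by simp
  qed
qed

lemma chain_top:
  assumes x: "x \<in> Sn n" and y: "y \<in> Sn n" and le: "inversions x \<subseteq> inversions y" and ne: "x \<noteq> y"
  shows "\<exists>j. Suc j < length y \<and> y ! Suc j < y ! j \<and> (y ! j, y ! Suc j) \<notin> inversions x"
proof -
  have dx: "distinct x" and dy: "distinct y" and sx: "set x = {1..n}" and sy: "set y = {1..n}"
    using x y by (auto simp: Sn_def)
  have "inversions x \<noteq> inversions y" using inv_determines[OF x y] ne by blast
  then obtain a0 b0 where "(a0, b0) \<in> inversions y - inversions x" using le by auto
  then obtain ab where ab: "ab \<in> inversions y - inversions x"
    and mn: "\<forall>ab'. ab' \<in> inversions y - inversions x \<longrightarrow>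
        ix y (snd ab) - ix y (fst ab) \<le> ix y (snd ab') - ix y (fst ab')"
    using ex_has_least_nat[of "\<lambda>ab. ab \<in> inversions y - inversions x" "(a0,b0)" "\<lambda>ab. ix y (snd ab) - ix y (fst ab)"]
    by blast
  obtain a b where abd: "ab = (a, b)" by (cases ab)
  have Iy: "(u, w) \<in> inversions y \<longleftrightarrow> u \<in> {1..n} \<and> w \<in> {1..n} \<and> w < u \<and> ix y u < ix y w" for u w
    using inv_ix[OF dy] sy by simp
  have Ix: "(u, w) \<in> inversions x \<longleftrightarrow> u \<in> {1..n} \<and> w \<in> {1..n} \<and> w < u \<and> ix x u < ix x w" for u w
    using inv_ix[OF dx] sx by simp
  have injx: "u \<in> {1..n} \<Longrightarrow> w \<in> {1..n} \<Longrightarrow> u \<noteq> w \<Longrightarrow> ix x u \<noteq> ix x w" for u w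
    using ix_inj[OF dx] sx by blast
  have abin: "(a, b) \<in> inversions y" "(a, b) \<notin> inversions x" using ab abd by auto
  have mn': "(u, w) \<in> inversions y \<Longrightarrow> (u, w) \<notin> inversions x \<Longrightarrow> ix y b - ix y a \<le> ix y w - ix y u" for u w
    using mn abd by force
  have a: "a \<in> {1..n}" and b: "b \<in> {1..n}" and ba: "b < a" and iab: "ix y a < ix y b"
    using abin(1) Iy by auto
  show ?thesis
  proof (cases "ix y b = Suc (ix y a)")
    case True
    have "ix y b < length y" "y ! ix y a = a" "y ! ix y b = b" using ix_bound[OF dy] a b sy by auto
    then show ?thesis using True ba abin(2) by (intro exI[of _ "ix y a"]) auto
  next
    case False
    let ?c = "y ! Suc (ix y a)"
    have bl: "ix y b < length y" using ix_bound[OF dy] b sy by auto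
    have cl: "Suc (ix y a) < length y" using False iab bl by linarith
    have c: "?c \<in> {1..n}" using cl sy nth_mem by blast
    have ic: "ix y ?c = Suc (ix y a)" using ix_nth[OF dy cl] .
    have ca: "?c \<noteq> a" "?c \<noteq> b" using ic False iab by auto
    have "False"
    proof (cases "a < ?c")
      case True
      have "(?c, b) \<in> inversions y" using Iy c b True ba ic iab False by auto
      moreover have "ix y b - ix y ?c < ix y b - ix y a" using ic iab False by simp
      ultimately have "(?c, b) \<in> inversions x" using mn'[of ?c b] by fastforce
      moreover have "(?c, a) \<notin> inversions x" using le Iy ic by auto
      ultimately show False using Ix a b c True abin(2) injx[of a ?c] ca ba by auto
    next
      case False
      show False
      proof (cases "?c < b")
        case True
        have "(a, ?c) \<in> inversions y" using Iy c a True ba ic by auto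
        moreover have "ix y ?c - ix y a < ix y b - ix y a" using ic iab \<open>ix y b \<noteq> Suc (ix y a)\<close> by simp
        ultimately have "(a, ?c) \<in> inversions x" using mn'[of a ?c] by fastforce
        moreover have "(b, ?c) \<notin> inversions x" using le Iy ic iab \<open>ix y b \<noteq> Suc (ix y a)\<close> by auto
        ultimately show False using Ix a b c True abin(2) injx[of b ?c] ca ba by auto
      next
        case False
        have cb: "b < ?c" "?c < a" using False \<open>\<not> a < ?c\<close> ca by auto
        have "(a, ?c) \<in> inversions y" using Iy c a cb ic by auto
        moreover have "ix y ?c - ix y a < ix y b - ix y a" using ic iab \<open>ix y b \<noteq> Suc (ix y a)\<close> by simp
        ultimately have 1: "(a, ?c) \<in> inversions x" using mn'[of a ?c] by fastforce
        have "(?c, b) \<in> inversions y" using Iy c b cb ic iab \<open>ix y b \<noteq> Suc (ix y a)\<close> by auto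
        moreover have "ix y b - ix y ?c < ix y b - ix y a" using ic iab \<open>ix y b \<noteq> Suc (ix y a)\<close> by simp
        ultimately have "(?c, b) \<in> inversions x" using mn'[of ?c b] by fastforce
        then show False using 1 Ix abin(2) a b by auto
      qed
    qed
    then show ?thesis ..
  qed
qed

lemma chain_bot:
  assumes x: "x \<in> Sn n" and y: "y \<in> Sn n" and le: "inversions x \<subseteq> inversions y" and ne: "x \<noteq> y"
  shows "\<exists>j. Suc j < length x \<and> x ! j < x ! Suc j \<and> (x ! Suc j, x ! j) \<in> inversions y"
proof -
  have dx: "distinct x" and dy: "distinct y" and sx: "set x = {1..n}" and sy: "set y = {1..n}"
    using x y by (auto simp: Sn_def)
  have "inversions x \<noteq> inversions y" using inv_determines[OF x y] ne by blast
  then obtain a0 b0 where "(a0, b0) \<in> inversions y - inversions x" using le by auto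
  then obtain ab where ab: "ab \<in> inversions y - inversions x"
    and mn: "\<forall>ab'. ab' \<in> inversions y - inversions x \<longrightarrow>
        ix x (fst ab) - ix x (snd ab) \<le> ix x (fst ab') - ix x (snd ab')"
    using ex_has_least_nat[of "\<lambda>ab. ab \<in> inversions y - inversions x" "(a0,b0)" "\<lambda>ab. ix x (fst ab) - ix x (snd ab)"]
    by blast
  obtain a b where abd: "ab = (a, b)" by (cases ab)
  have Iy: "(u, w) \<in> inversions y \<longleftrightarrow> u \<in> {1..n} \<and> w \<in> {1..n} \<and> w < u \<and> ix y u < ix y w" for u w
    using inv_ix[OF dy] sy by simp
  have Ix: "(u, w) \<in> inversions x \<longleftrightarrow> u \<in> {1..n} \<and> w \<in> {1..n} \<and> w < u \<and> ix x u < ix x w" for u w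
    using inv_ix[OF dx] sx by simp
  have injx: "u \<in> {1..n} \<Longrightarrow> w \<in> {1..n} \<Longrightarrow> u \<noteq> w \<Longrightarrow> ix x u \<noteq> ix x w" for u w
    using ix_inj[OF dx] sx by blast
  have injy: "u \<in> {1..n} \<Longrightarrow> w \<in> {1..n} \<Longrightarrow> u \<noteq> w \<Longrightarrow> ix y u \<noteq> ix y w" for u w
    using ix_inj[OF dy] sy by blast
  have abin: "(a, b) \<in> inversions y" "(a, b) \<notin> inversions x" using ab abd by auto
  have mn': "(u, w) \<in> inversions y \<Longrightarrow> (u, w) \<notin> inversions x \<Longrightarrow> ix x a - ix x b \<le> ix x u - ix x w" for u w
    using mn abd by force
  have a: "a \<in> {1..n}" and b: "b \<in> {1..n}" and ba: "b < a" and iab: "ix y a < ix y b"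
    using abin(1) Iy by auto
  have "\<not> ix x a < ix x b" using abin(2) Ix a b ba by auto
  moreover have "ix x a \<noteq> ix x b" using injx[of a b] a b ba by simp
  ultimately have ixab: "ix x b < ix x a" by linarith
  show ?thesis
  proof (cases "ix x a = Suc (ix x b)")
    case True
    have "ix x a < length x" "x ! ix x a = a" "x ! ix x b = b" using ix_bound[OF dx] a b sx by auto
    then show ?thesis using True ba abin(1) by (intro exI[of _ "ix x b"]) auto
  next
    case False
    let ?c = "x ! Suc (ix x b)"
    have al: "ix x a < length x" using ix_bound[OF dx] a sx by auto
    have cl: "Suc (ix x b) < length x" using False ixab al by linarith
    have c: "?c \<in> {1..n}" using cl sx nth_mem by blast
    have ic: "ix x ?c = Suc (ix x b)" using ix_nth[OF dx cl] .
    have ca: "?c \<noteq> a" "?c \<noteq> b" using ic False ixab by auto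
    have d1: "ix x ?c - ix x b < ix x a - ix x b" "ix x a - ix x ?c < ix x a - ix x b"
      using ic ixab False by auto
    have "False"
    proof (cases "a < ?c")
      case True
      have "(?c, b) \<notin> inversions x" using Ix ic by auto
      then have "(?c, b) \<notin> inversions y" using mn'[of ?c b] d1 by fastforce
      then have 1: "ix y b < ix y ?c" using not_inv_order[OF dy, of ?c b] c b True ba sy by auto
      have "(?c, a) \<in> inversions x" using Ix a c True ic ixab False by auto
      then have "ix y ?c < ix y a" using le Iy by auto
      then show False using 1 iab by simp
    next
      case False
      show False
      proof (cases "?c < b")
        case True
        have "(a, ?c) \<notin> inversions x" using Ix ic ixab False by auto
        then have "(a, ?c) \<notin> inversions y" using mn'[of a ?c] d1 by fastforce
        then have 1: "ix y ?c < ix y a" using not_inv_order[OF dy, of a ?c] c a True ba sy by auto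
        have "(b, ?c) \<in> inversions x" using Ix b c True ic by auto
        then have "ix y b < ix y ?c" using le Iy by auto
        then show False using 1 iab by simp
      next
        case False
        have cb: "b < ?c" "?c < a" using False \<open>\<not> a < ?c\<close> ca by auto
        have "(?c, b) \<notin> inversions x" using Ix ic by auto
        then have "(?c, b) \<notin> inversions y" using mn'[of ?c b] d1 by fastforce
        then have 1: "ix y b < ix y ?c" using not_inv_order[OF dy, of ?c b] c b cb sy by auto
        have "(a, ?c) \<notin> inversions x" using Ix ic ixab \<open>ix x a \<noteq> Suc (ix x b)\<close> by auto
        then have "(a, ?c) \<notin> inversions y" using mn'[of a ?c] d1 by fastforce
        then have "ix y ?c < ix y a" using not_inv_order[OF dy, of a ?c] c a cb sy by auto
        then show False using 1 iab by simp
      qed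
    qed
    then show ?thesis ..
  qed
qed

section \<open>Contractible descents\<close>

definition cont :: "vpattern set \<Rightarrow> nat list \<Rightarrow> nat \<Rightarrow> bool" where
  "cont P p j \<longleftrightarrow> (\<exists>tp\<in>P. \<exists>idx. occurrence p tp idx \<and> idx (snd tp) = j)"

lemma rewrite_step_cont: "rewrite_step P p q \<longleftrightarrow> (\<exists>j. cont P p j \<and> q = swap_adj p j)"
  unfolding rewrite_step_def cont_def by blast

lemma occ_def2: "occurrence p (tau, i) idx \<longleftrightarrow>
     Suc i < length tau \<and>
     (\<forall>a b. a < b \<and> b < length tau \<longrightarrow> idx a < idx b) \<and>
     (\<forall>a<length tau. idx a < length p) \<and>
     (\<forall>a<length tau. \<forall>b<length tau. p ! idx a < p ! idx b \<longleftrightarrow> tau ! a < tau ! b) \<and>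
     idx (Suc i) = Suc (idx i)"
  unfolding occurrence_def Let_def by simp

lemma wb_facts:
  assumes "well_behaved P" "(tau, i) \<in> P"
  shows "length tau \<ge> 2" "Suc i < length tau" "tau ! i = length tau" "tau ! Suc i = 1"
    "distinct tau" "set tau = {1..length tau}"
    "\<And>A' B'. mset A' = mset (take i tau) \<Longrightarrow> mset B' = mset (drop (i + 2) tau) \<Longrightarrow>
        (A' @ [length tau, 1] @ B', i) \<in> P"
  using assms unfolding well_behaved_def by fastforce+

lemma wb_lt:
  assumes wb: "well_behaved P" and tp: "(tau, i) \<in> P" and a: "a < length tau"
  shows "a \<noteq> i \<Longrightarrow> tau ! a < tau ! i" and "a \<noteq> Suc i \<Longrightarrow> tau ! Suc i < tau ! a"
proof -
  note f = wb_facts[OF wb tp]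
  have m: "tau ! a \<in> {1..length tau}" using a f(6) nth_mem by blast
  show "a \<noteq> i \<Longrightarrow> tau ! a < tau ! i"
  proof -
    assume "a \<noteq> i"
    then have "tau ! a \<noteq> tau ! i" using f(5) f(2) a by (simp add: nth_eq_iff_index_eq)
    then show ?thesis using m f(3) by auto
  qed
  show "a \<noteq> Suc i \<Longrightarrow> tau ! Suc i < tau ! a"
  proof -
    assume "a \<noteq> Suc i"
    then have "tau ! a \<noteq> tau ! Suc i" using f(5) f(2) a by (simp add: nth_eq_iff_index_eq)
    then show ?thesis using m f(4) by auto
  qed
qed

lemma occ_vals:
  assumes wb: "well_behaved P" and tp: "(tau, i) \<in> P" and occ: "occurrence p (tau, i) idx"
    and a: "a < length tau"
  shows "a \<noteq> i \<Longrightarrow> p ! idx a < p ! idx i" and "a \<noteq> Suc i \<Longrightarrow> p ! idx (Suc i) < p ! idx a"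
  using occ wb_lt[OF wb tp a] a wb_facts(2)[OF wb tp] unfolding occ_def2 by auto

lemma occ_inj:
  assumes occ: "occurrence p (tau, i) idx" and "a < length tau" "b < length tau" "a \<noteq> b"
  shows "idx a \<noteq> idx b"
  using assms unfolding occ_def2 by (metis less_irrefl linorder_neqE_nat)

lemma occ_transfer:
  assumes wb: "well_behaved P" and tp: "(tau, i) \<in> P" and occ: "occurrence p (tau, i) idx"
    and mono: "\<forall>a b. a < b \<and> b < length tau \<longrightarrow> idx' a < idx' b"
    and bnd: "\<forall>a<length tau. idx' a < length q"
    and adj: "idx' (Suc i) = Suc (idx' i)"
    and oth: "\<forall>a<length tau. a \<noteq> i \<and> a \<noteq> Suc i \<longrightarrow> q ! idx' a = p ! idx a"
    and hi: "q ! idx' i \<ge> p ! idx i" and lo: "q ! idx' (Suc i) \<le> p ! idx (Suc i)"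
  shows "occurrence q (tau, i) idx'"
proof -
  let ?k = "length tau"
  have si: "Suc i < ?k" using wb_facts(2)[OF wb tp] .
  have iso: "\<forall>a<?k. \<forall>b<?k. p ! idx a < p ! idx b \<longleftrightarrow> tau ! a < tau ! b"
    using occ unfolding occ_def2 by blast
  have key: "q ! idx' a < q ! idx' b \<longleftrightarrow> p ! idx a < p ! idx b" if a: "a < ?k" and b: "b < ?k" for a b
  proof -
    note va = occ_vals[OF wb tp occ a] and vb = occ_vals[OF wb tp occ b]
    note vsi = occ_vals[OF wb tp occ si] and vi = occ_vals[OF wb tp occ, of i]
    have ii: "p ! idx (Suc i) < p ! idx i" using vsi(1) by simp
    show ?thesis
    proof (cases "a = i")
      case True
      then show ?thesis using hi lo oth b vb ii by (cases "b = i"; cases "b = Suc i") auto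
    next
      case fa: False
      show ?thesis
      proof (cases "a = Suc i")
        case True
        then show ?thesis using hi lo oth b vb ii by (cases "b = i"; cases "b = Suc i") auto
      next
        case False
        then show ?thesis using hi lo oth a b va vb ii fa by (cases "b = i"; cases "b = Suc i") auto
      qed
    qed
  qed
  show ?thesis unfolding occ_def2 using si mono bnd adj iso key by auto
qed

lemma cont_same:
  assumes wb: "well_behaved P" and c: "cont P p j" and len: "length q = length p"
    and hi: "q ! j \<ge> p ! j" and lo: "q ! Suc j \<le> p ! Suc j"
    and oth: "\<forall>r<length p. r \<noteq> j \<and> r \<noteq> Suc j \<and> p ! Suc j < p ! r \<and> p ! r < p ! j \<longrightarrow> q ! r = p ! r"
  shows "cont P q j"
proof -
  obtain tau i idx where tp: "(tau, i) \<in> P" and occ: "occurrence p (tau, i) idx" and ij: "idx i = j"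
    using c unfolding cont_def by auto
  have si: "Suc i < length tau" using wb_facts(2)[OF wb tp] .
  have occ2: "occurrence q (tau, i) idx"
  proof (rule occ_transfer[OF wb tp occ])
    show "\<forall>a b. a < b \<and> b < length tau \<longrightarrow> idx a < idx b" using occ unfolding occ_def2 by blast
    show "\<forall>a<length tau. idx a < length q" using occ len unfolding occ_def2 by simp
    show "idx (Suc i) = Suc (idx i)" using occ unfolding occ_def2 by blast
    show "q ! idx i \<ge> p ! idx i" using hi ij by simp
    have sj: "idx (Suc i) = Suc j" using occ ij unfolding occ_def2 by simp
    show "q ! idx (Suc i) \<le> p ! idx (Suc i)" using lo sj by simp
    show "\<forall>a<length tau. a \<noteq> i \<and> a \<noteq> Suc i \<longrightarrow> q ! idx a = p ! idx a"
    proof (intro allI impI)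
      fix a assume a: "a < length tau" and an: "a \<noteq> i \<and> a \<noteq> Suc i"
      have "idx a \<noteq> j" "idx a \<noteq> Suc j" using occ_inj[OF occ a, of i] occ_inj[OF occ a, of "Suc i"] si an ij sj by auto
      moreover have "p ! Suc j < p ! idx a" "p ! idx a < p ! j"
        using occ_vals[OF wb tp occ a] an ij sj by auto
      moreover have "idx a < length p" using occ a unfolding occ_def2 by blast
      ultimately show "q ! idx a = p ! idx a" using oth by blast
    qed
  qed
  then show ?thesis unfolding cont_def using tp ij by force
qed

lemma cont_shiftR:
  assumes wb: "well_behaved P" and c: "cont P p j" and jl: "Suc (Suc j) < length p"
    and len: "length q = length p"
    and out: "\<not> (p ! Suc j < p ! Suc (Suc j) \<and> p ! Suc (Suc j) < p ! j)"
    and hi: "q ! Suc j \<ge> p ! j" and lo: "q ! Suc (Suc j) \<le> p ! Suc j"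
    and oth: "\<forall>r<length p. (r < j \<or> Suc (Suc j) < r) \<and> p ! Suc j < p ! r \<and> p ! r < p ! j \<longrightarrow> q ! r = p ! r"
  shows "cont P q (Suc j)"
proof -
  obtain tau i idx where tp: "(tau, i) \<in> P" and occ: "occurrence p (tau, i) idx" and ij: "idx i = j"
    using c unfolding cont_def by auto
  have si: "Suc i < length tau" using wb_facts(2)[OF wb tp] .
  have mono: "\<forall>a b. a < b \<and> b < length tau \<longrightarrow> idx a < idx b" using occ unfolding occ_def2 by blast
  have sj: "idx (Suc i) = Suc j" using occ ij unfolding occ_def2 by simp
  have bnd: "\<forall>a<length tau. idx a < length p" using occ unfolding occ_def2 by blast
  have lt: "idx a < j" if "a < i" for a using mono that si ij by auto
  have gt: "Suc (Suc j) < idx a" if "Suc i < a" "a < length tau" for a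
  proof -
    have "Suc j < idx a" using mono that sj by force
    moreover have "p ! Suc j < p ! idx a" "p ! idx a < p ! j"
      using occ_vals[OF wb tp occ, of a] that ij sj by auto
    then have "idx a \<noteq> Suc (Suc j)" using out by auto
    ultimately show ?thesis by simp
  qed
  have gt': "Suc (Suc j) < idx b" if "i < b" "b \<noteq> Suc i" "b < length tau" for b
    using gt that by simp
  define idx' where "idx' = (\<lambda>a. if a = i then Suc j else if a = Suc i then Suc (Suc j) else idx a)"
  have occ2: "occurrence q (tau, i) idx'"
  proof (rule occ_transfer[OF wb tp occ])
    show "\<forall>a b. a < b \<and> b < length tau \<longrightarrow> idx' a < idx' b"
    proof (intro allI impI)
      fix a b assume ab: "a < b \<and> b < length tau"
      show "idx' a < idx' b"
      proof (cases "a < i")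
        case True
        then show ?thesis using ab lt gt mono unfolding idx'_def
          by (cases "b < i"; cases "b = i"; cases "b = Suc i") (auto simp: less_Suc_eq)
      next
        case False
        then show ?thesis using ab lt gt'[of b] gt'[of a] mono unfolding idx'_def
          by (cases "a = i"; cases "a = Suc i"; cases "b = Suc i") auto
      qed
    qed
    show "\<forall>a<length tau. idx' a < length q"
      using bnd jl len unfolding idx'_def by auto
    show "idx' (Suc i) = Suc (idx' i)" unfolding idx'_def by simp
    show "q ! idx' i \<ge> p ! idx i" using hi ij unfolding idx'_def by simp
    show "q ! idx' (Suc i) \<le> p ! idx (Suc i)" using lo sj unfolding idx'_def by simp
    show "\<forall>a<length tau. a \<noteq> i \<and> a \<noteq> Suc i \<longrightarrow> q ! idx' a = p ! idx a"
    proof (intro allI impI)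
      fix a assume a: "a < length tau" and an: "a \<noteq> i \<and> a \<noteq> Suc i"
      have "idx a < j \<or> Suc (Suc j) < idx a" using lt gt a an by (metis linorder_neqE_nat Suc_lessI)
      moreover have "p ! Suc j < p ! idx a" "p ! idx a < p ! j"
        using occ_vals[OF wb tp occ a] an ij sj by auto
      ultimately show "q ! idx' a = p ! idx a" using oth bnd a an unfolding idx'_def by auto
    qed
  qed
  then show ?thesis unfolding cont_def using tp by (force simp: idx'_def)
qed

lemma cont_shiftL:
  assumes wb: "well_behaved P" and c: "cont P p (Suc j)" and jl: "Suc (Suc j) < length p"
    and len: "length q = length p"
    and out: "\<not> (p ! Suc (Suc j) < p ! j \<and> p ! j < p ! Suc j)"
    and hi: "q ! j \<ge> p ! Suc j" and lo: "q ! Suc j \<le> p ! Suc (Suc j)"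
    and oth: "\<forall>r<length p. (r < j \<or> Suc (Suc j) < r) \<and> p ! Suc (Suc j) < p ! r \<and> p ! r < p ! Suc j \<longrightarrow> q ! r = p ! r"
  shows "cont P q j"
proof -
  obtain tau i idx where tp: "(tau, i) \<in> P" and occ: "occurrence p (tau, i) idx" and ij: "idx i = Suc j"
    using c unfolding cont_def by auto
  have si: "Suc i < length tau" using wb_facts(2)[OF wb tp] .
  have mono: "\<forall>a b. a < b \<and> b < length tau \<longrightarrow> idx a < idx b" using occ unfolding occ_def2 by blast
  have sj: "idx (Suc i) = Suc (Suc j)" using occ ij unfolding occ_def2 by simp
  have bnd: "\<forall>a<length tau. idx a < length p" using occ unfolding occ_def2 by blast
  have gt: "Suc (Suc j) < idx a" if "Suc i < a" "a < length tau" for a using mono that sj by force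
  have lt: "idx a < j" if "a < i" for a
  proof -
    have "idx a < Suc j" using mono that si ij by force
    moreover have "p ! Suc (Suc j) < p ! idx a" "p ! idx a < p ! Suc j"
      using occ_vals[OF wb tp occ, of a] that ij sj si by auto
    then have "idx a \<noteq> j" using out by auto
    ultimately show ?thesis by simp
  qed
  have gt': "Suc (Suc j) < idx b" if "i < b" "b \<noteq> Suc i" "b < length tau" for b
    using gt that by simp
  define idx' where "idx' = (\<lambda>a. if a = i then j else if a = Suc i then Suc j else idx a)"
  have occ2: "occurrence q (tau, i) idx'"
  proof (rule occ_transfer[OF wb tp occ])
    show "\<forall>a b. a < b \<and> b < length tau \<longrightarrow> idx' a < idx' b"
    proof (intro allI impI)
      fix a b assume ab: "a < b \<and> b < length tau"
      show "idx' a < idx' b"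
      proof (cases "a < i")
        case True
        then show ?thesis using ab lt gt mono unfolding idx'_def
          by (cases "b < i"; cases "b = i"; cases "b = Suc i") (auto simp: less_Suc_eq)
      next
        case False
        then show ?thesis using ab lt gt'[of b] gt'[of a] mono unfolding idx'_def
          by (cases "a = i"; cases "a = Suc i"; cases "b = Suc i") auto
      qed
    qed
    show "\<forall>a<length tau. idx' a < length q"
      using bnd jl len unfolding idx'_def by auto
    show "idx' (Suc i) = Suc (idx' i)" unfolding idx'_def by simp
    show "q ! idx' i \<ge> p ! idx i" using hi ij unfolding idx'_def by simp
    show "q ! idx' (Suc i) \<le> p ! idx (Suc i)" using lo sj unfolding idx'_def by simp
    show "\<forall>a<length tau. a \<noteq> i \<and> a \<noteq> Suc i \<longrightarrow> q ! idx' a = p ! idx a"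
    proof (intro allI impI)
      fix a assume a: "a < length tau" and an: "a \<noteq> i \<and> a \<noteq> Suc i"
      have "idx a < j \<or> Suc (Suc j) < idx a" using lt gt a an by (metis linorder_neqE_nat Suc_lessI)
      moreover have "p ! Suc (Suc j) < p ! idx a" "p ! idx a < p ! Suc j"
        using occ_vals[OF wb tp occ a] an ij sj by auto
      ultimately show "q ! idx' a = p ! idx a" using oth bnd a an unfolding idx'_def by auto
    qed
  qed
  then show ?thesis unfolding cont_def using tp by (force simp: idx'_def)
qed



lemma take_swap_in: "Suc c < m \<Longrightarrow> Suc c < length xs \<Longrightarrow> take m (swap_adj xs c) = swap_adj (take m xs) c"
  by (simp add: swap_adj_def take_update_swap)

lemma take_swap_out: "m \<le> c \<Longrightarrow> take m (swap_adj xs c) = take m xs"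
  by (simp add: swap_adj_def)

lemma drop_swap_in: "m \<le> c \<Longrightarrow> Suc c < length xs \<Longrightarrow> drop m (swap_adj xs c) = swap_adj (drop m xs) (c - m)"
  by (simp add: swap_adj_def drop_update_swap Suc_diff_le)

lemma drop_swap_out: "Suc c < m \<Longrightarrow> drop m (swap_adj xs c) = drop m xs"
  by (simp add: swap_adj_def)

lemma mset_take_swap: "Suc c < length xs \<Longrightarrow> Suc c < m \<or> m \<le> c \<Longrightarrow> mset (take m (swap_adj xs c)) = mset (take m xs)"
proof -
  assume a: "Suc c < length xs" "Suc c < m \<or> m \<le> c"
  show ?thesis
  proof (cases "m \<le> c")
    case True then show ?thesis using take_swap_out by simp
  next
    case False
    then have h: "Suc c < m" using a by simp
    have "Suc c < length (take m xs)" using h a by simp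
    then show ?thesis using take_swap_in[OF h a(1)] mset_swap_adj by metis
  qed
qed

lemma mset_drop_swap: "Suc c < length xs \<Longrightarrow> Suc c < m \<or> m \<le> c \<Longrightarrow> mset (drop m (swap_adj xs c)) = mset (drop m xs)"
proof -
  assume a: "Suc c < length xs" "Suc c < m \<or> m \<le> c"
  show ?thesis
  proof (cases "m \<le> c")
    case True
    have "Suc (c - m) < length (drop m xs)" using a True by auto
    then show ?thesis using drop_swap_in[OF True a(1)] mset_swap_adj by metis
  next
    case False
    then show ?thesis using a drop_swap_out by auto
  qed
qed

lemma list_split2: "Suc i < length xs \<Longrightarrow> xs = take i xs @ [xs ! i, xs ! Suc i] @ drop (Suc (Suc i)) xs"
  by (metis Cons_nth_drop_Suc Suc_lessD append_Cons append_Nil append_take_drop_id)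



lemma cont_square:
  assumes wb: "well_behaved P" and c: "cont P p j" and kl: "Suc k0 < length p"
    and disj: "Suc k0 < j \<or> Suc j < k0"
  shows "cont P (swap_adj p k0) j"
proof -
  obtain tau i idx where tp: "(tau, i) \<in> P" and occ: "occurrence p (tau, i) idx" and ij: "idx i = j"
    using c unfolding cont_def by auto
  let ?q = "swap_adj p k0"
  let ?k = "length tau"
  have si: "Suc i < ?k" using wb_facts(2)[OF wb tp] .
  have mono: "\<forall>a b. a < b \<and> b < ?k \<longrightarrow> idx a < idx b" using occ unfolding occ_def2 by blast
  have sj: "idx (Suc i) = Suc j" using occ ij unfolding occ_def2 by simp
  have bnd: "\<forall>a<?k. idx a < length p" using occ unfolding occ_def2 by blast
  have iso: "\<forall>a<?k. \<forall>b<?k. p ! idx a < p ! idx b \<longleftrightarrow> tau ! a < tau ! b"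
    using occ unfolding occ_def2 by blast
  show ?thesis
  proof (cases "(\<exists>c<?k. idx c = k0) \<and> (\<exists>c<?k. idx c = Suc k0)")
    case True
    then obtain c c' where c: "c < ?k" "idx c = k0" and c': "c' < ?k" "idx c' = Suc k0" by blast
    have "c < c'"
    proof (rule ccontr)
      assume "\<not> c < c'"
      then have "c' < c \<or> c' = c" by auto
      moreover have "c' < c \<Longrightarrow> idx c' < idx c" using mono c by blast
      ultimately show False using c c' by auto
    qed
    moreover have "\<not> Suc c < c'"
    proof
      assume h: "Suc c < c'"
      have "idx c < idx (Suc c)" using mono h c' by auto
      moreover have "idx (Suc c) < idx c'" using mono h c'(1) by blast
      ultimately show False using c(2) c'(2) by linarith
    qed
    ultimately have cc: "c' = Suc c" by simp
    have sc: "Suc c < ?k" and isc: "idx (Suc c) = Suc k0" using c' cc by auto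
    have cn: "c \<noteq> i" "c \<noteq> Suc i" "Suc c \<noteq> i" using c isc ij sj disj by auto
    let ?tau' = "swap_adj tau c"
    have lt': "length ?tau' = ?k" by simp
    have sw: "swap_adj tau c ! a = tau ! (if a = c then Suc c else if a = Suc c then c else a)" if "a < ?k" for a
      using that sc by (simp add: nth_swap_adj)
    have qv: "?q ! idx a = p ! idx (if a = c then Suc c else if a = Suc c then c else a)" if "a < ?k" for a
    proof -
      have "a \<noteq> c \<Longrightarrow> a \<noteq> Suc c \<Longrightarrow> idx a \<noteq> k0 \<and> idx a \<noteq> Suc k0"
        using occ_inj[OF occ that, of c] occ_inj[OF occ that, of "Suc c"] c sc isc by auto
      then show ?thesis using that bnd kl c isc by (auto simp: nth_swap_adj)
    qed
    have occ2: "occurrence ?q (?tau', i) idx"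
      unfolding occ_def2 lt'
    proof (intro conjI)
      show "Suc i < ?k" using si .
      show "\<forall>a b. a < b \<and> b < ?k \<longrightarrow> idx a < idx b" using mono .
      show "\<forall>a<?k. idx a < length ?q" using bnd by simp
      show "idx (Suc i) = Suc (idx i)" using sj ij by simp
      show "\<forall>a<?k. \<forall>b<?k. (?q ! idx a < ?q ! idx b) = (?tau' ! a < ?tau' ! b)"
      proof (intro allI impI)
        fix a b assume a: "a < ?k" and b: "b < ?k"
        define sa where "sa = (if a = c then Suc c else if a = Suc c then c else a)"
        define sb where "sb = (if b = c then Suc c else if b = Suc c then c else b)"
        have "sa < ?k" "sb < ?k" using a b sc unfolding sa_def sb_def by auto
        then have "p ! idx sa < p ! idx sb \<longleftrightarrow> tau ! sa < tau ! sb" using iso by blast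
        then show "(?q ! idx a < ?q ! idx b) = (?tau' ! a < ?tau' ! b)"
          unfolding qv[OF a] qv[OF b] sw[OF a] sw[OF b] sa_def sb_def .
      qed
    qed
    have tau'_i: "?tau' ! i = ?k" "?tau' ! Suc i = 1"
      using wb_facts(3,4)[OF wb tp] cn sc si by (auto simp: nth_swap_adj)
    have e: "?tau' = take i ?tau' @ [?tau' ! i, ?tau' ! Suc i] @ drop (Suc (Suc i)) ?tau'"
      by (rule list_split2) (simp add: si)
    have dec: "?tau' = take i ?tau' @ [?k, 1] @ drop (i + 2) ?tau'"
      unfolding add_2_eq_Suc' by (rule e[unfolded tau'_i])
    have cases_c: "Suc c < i \<or> i \<le> c" "Suc c < i + 2 \<or> i + 2 \<le> c" using cn by auto
    have "(take i ?tau' @ [?k, 1] @ drop (i + 2) ?tau', i) \<in> P"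
      by (rule wb_facts(7)[OF wb tp]) (use mset_take_swap[OF sc cases_c(1)] mset_drop_swap[OF sc cases_c(2)] in auto)
    then have "(?tau', i) \<in> P" using dec by simp
    then show ?thesis unfolding cont_def using occ2 ij by force
  next
    case False
    define t where "t = (\<lambda>r. if r = k0 then Suc k0 else if r = Suc k0 then k0 else r)"
    have qt: "?q ! t r = p ! r" if "r < length p" for r
      using that kl unfolding t_def by (auto simp: nth_swap_adj)
    have tj: "t j = j" "t (Suc j) = Suc j" using disj unfolding t_def by auto
    have occ2: "occurrence ?q (tau, i) (t \<circ> idx)"
    proof (rule occ_transfer[OF wb tp occ])
      show "\<forall>a b. a < b \<and> b < ?k \<longrightarrow> (t \<circ> idx) a < (t \<circ> idx) b"
      proof (intro allI impI)
        fix a b assume ab: "a < b \<and> b < ?k"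
        have lt: "idx a < idx b" using mono ab by blast
        have ak: "a < ?k" using ab by auto
        have "\<not> (idx a = k0 \<and> idx b = Suc k0)"
        proof
          assume h: "idx a = k0 \<and> idx b = Suc k0"
          have "(\<exists>c<?k. idx c = k0) \<and> (\<exists>c<?k. idx c = Suc k0)"
            by (intro conjI exI[of _ a] exI[of _ b]) (use h ak ab in auto)
          then show False using False by simp
        qed
        then show "(t \<circ> idx) a < (t \<circ> idx) b" using lt unfolding t_def by auto
      qed
      show "\<forall>a<?k. (t \<circ> idx) a < length ?q" using bnd kl unfolding t_def by auto
      show "(t \<circ> idx) (Suc i) = Suc ((t \<circ> idx) i)" using tj ij sj by simp
      show "\<forall>a<?k. a \<noteq> i \<and> a \<noteq> Suc i \<longrightarrow> ?q ! (t \<circ> idx) a = p ! idx a" using qt bnd by simp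
      show "?q ! (t \<circ> idx) i \<ge> p ! idx i" using qt bnd si by simp
      show "?q ! (t \<circ> idx) (Suc i) \<le> p ! idx (Suc i)" using qt bnd si by simp
    qed
    show ?thesis unfolding cont_def
      by (rule bexI[OF _ tp], rule exI[of _ "t \<circ> idx"]) (simp add: occ2 ij tj)
  qed
qed


section \<open>The rewriting system\<close>

lemma cont_desc:
  assumes wb: "well_behaved P" and c: "cont P p j"
  shows "Suc j < length p" "p ! Suc j < p ! j"
proof -
  obtain tau i idx where tp: "(tau, i) \<in> P" and occ: "occurrence p (tau, i) idx" and ij: "idx i = j"
    using c unfolding cont_def by auto
  have si: "Suc i < length tau" using wb_facts(2)[OF wb tp] .
  have sj: "idx (Suc i) = Suc j" using occ ij unfolding occ_def2 by simp
  show "Suc j < length p" using occ si sj unfolding occ_def2 by metis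
  show "p ! Suc j < p ! j" using occ_vals(1)[OF wb tp occ si] ij sj by simp
qed

lemma swap_at1: "Suc j < length p \<Longrightarrow> swap_adj p j ! j = p ! Suc j"
  by (simp add: nth_swap_adj)

lemma swap_at2: "Suc j < length p \<Longrightarrow> swap_adj p j ! Suc j = p ! j"
  by (simp add: nth_swap_adj)

lemma swap_other: "r \<noteq> j \<Longrightarrow> r \<noteq> Suc j \<Longrightarrow> swap_adj p j ! r = p ! r"
  by (simp add: swap_adj_def)

lemma swap_other2: "swap_adj p m ! Suc (Suc m) = p ! Suc (Suc m)" "swap_adj p (Suc m) ! m = p ! m"
  by (simp_all add: swap_other)

lemma oth_helper:
  assumes "\<forall>r. r \<noteq> m \<and> r \<noteq> Suc m \<and> r \<noteq> Suc (Suc m) \<longrightarrow> q ! r = p ! r"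
    and "\<forall>r<length p. C r \<longrightarrow> r \<noteq> m \<and> r \<noteq> Suc m \<and> r \<noteq> Suc (Suc m)"
  shows "\<forall>r<length p. C r \<longrightarrow> q ! r = p ! r"
  using assms by blast

lemma hexD:
  assumes wb: "well_behaved P" and l: "Suc (Suc m) < length p"
    and d1: "p ! Suc m < p ! m" and d2: "p ! Suc (Suc m) < p ! Suc m"
  shows "cont P p m \<Longrightarrow> cont P (swap_adj p (Suc m)) m \<and> cont P (swap_adj (swap_adj p (Suc m)) m) (Suc m)"
    and "cont P p (Suc m) \<Longrightarrow> cont P (swap_adj p m) (Suc m) \<and> cont P (swap_adj (swap_adj p m) (Suc m)) m"
proof -
  assume c: "cont P p m"
  show "cont P (swap_adj p (Suc m)) m \<and> cont P (swap_adj (swap_adj p (Suc m)) m) (Suc m)"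
  proof
    show "cont P (swap_adj p (Suc m)) m"
      by (rule cont_same[OF wb c]; ((rule oth_helper[of m], simp add: swap_other, use d1 d2 in auto)
          | (use l d1 d2 in \<open>simp add: swap_at1 swap_at2 swap_other swap_other2\<close>)))
    show "cont P (swap_adj (swap_adj p (Suc m)) m) (Suc m)"
      by (rule cont_shiftR[OF wb c l]; ((rule oth_helper[of m], simp add: swap_other, use d1 d2 in auto)
          | (use l d1 d2 in \<open>simp add: swap_at1 swap_at2 swap_other swap_other2\<close>)))
  qed
next
  assume c: "cont P p (Suc m)"
  show "cont P (swap_adj p m) (Suc m) \<and> cont P (swap_adj (swap_adj p m) (Suc m)) m"
  proof
    show "cont P (swap_adj p m) (Suc m)"
      by (rule cont_same[OF wb c]; ((rule oth_helper[of m], simp add: swap_other, use d1 d2 in auto)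
          | (use l d1 d2 in \<open>simp add: swap_at1 swap_at2 swap_other swap_other2\<close>)))
    show "cont P (swap_adj (swap_adj p m) (Suc m)) m"
      by (rule cont_shiftL[OF wb c l]; ((rule oth_helper[of m], simp add: swap_other, use d1 d2 in auto)
          | (use l d1 d2 in \<open>simp add: swap_at1 swap_at2 swap_other swap_other2\<close>)))
  qed
qed

lemma hexU:
  assumes wb: "well_behaved P" and l: "Suc (Suc m) < length p"
    and a1: "p ! m < p ! Suc m" and a2: "p ! Suc m < p ! Suc (Suc m)"
  shows "cont P (swap_adj p m) m \<Longrightarrow>
      cont P (swap_adj (swap_adj p m) (Suc m)) (Suc m) \<and>
      cont P (swap_adj (swap_adj p (Suc m)) m) m \<and>
      cont P (swap_adj (swap_adj (swap_adj p (Suc m)) m) (Suc m)) (Suc m)"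
    and "cont P (swap_adj p (Suc m)) (Suc m) \<Longrightarrow>
      cont P (swap_adj (swap_adj p (Suc m)) m) m \<and>
      cont P (swap_adj (swap_adj (swap_adj p m) (Suc m)) m) m \<and>
      cont P (swap_adj (swap_adj p m) (Suc m)) (Suc m)"
proof -
  assume c: "cont P (swap_adj p m) m"
  have l1: "Suc (Suc m) < length (swap_adj p m)" using l by simp
  have o1: "\<forall>r. r \<noteq> m \<and> r \<noteq> Suc m \<and> r \<noteq> Suc (Suc m) \<longrightarrow> swap_adj p m ! r = p ! r"
    by (simp add: swap_other)
  show "cont P (swap_adj (swap_adj p m) (Suc m)) (Suc m) \<and>
      cont P (swap_adj (swap_adj p (Suc m)) m) m \<and>
      cont P (swap_adj (swap_adj (swap_adj p (Suc m)) m) (Suc m)) (Suc m)"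
  proof (intro conjI)
    show "cont P (swap_adj (swap_adj p m) (Suc m)) (Suc m)"
      by (rule cont_shiftR[OF wb c l1]; ((rule oth_helper[of m], simp add: swap_other, use a1 a2 l in \<open>auto simp: swap_at1 swap_at2 swap_other swap_other2\<close>)
          | (use l a1 a2 in \<open>simp add: swap_at1 swap_at2 swap_other swap_other2\<close>)))
    show "cont P (swap_adj (swap_adj p (Suc m)) m) m"
      by (rule cont_same[OF wb c]; ((rule oth_helper[of m], simp add: swap_other, use a1 a2 l in \<open>auto simp: swap_at1 swap_at2 swap_other swap_other2\<close>)
          | (use l a1 a2 in \<open>simp add: swap_at1 swap_at2 swap_other swap_other2\<close>)))
    show "cont P (swap_adj (swap_adj (swap_adj p (Suc m)) m) (Suc m)) (Suc m)"
      by (rule cont_shiftR[OF wb c l1]; ((rule oth_helper[of m], simp add: swap_other, use a1 a2 l in \<open>auto simp: swap_at1 swap_at2 swap_other swap_other2\<close>)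
          | (use l a1 a2 in \<open>simp add: swap_at1 swap_at2 swap_other swap_other2\<close>)))
  qed
next
  assume c: "cont P (swap_adj p (Suc m)) (Suc m)"
  have l1: "Suc (Suc m) < length (swap_adj p (Suc m))" using l by simp
  show "cont P (swap_adj (swap_adj p (Suc m)) m) m \<and>
      cont P (swap_adj (swap_adj (swap_adj p m) (Suc m)) m) m \<and>
      cont P (swap_adj (swap_adj p m) (Suc m)) (Suc m)"
  proof (intro conjI)
    show "cont P (swap_adj (swap_adj p (Suc m)) m) m"
      by (rule cont_shiftL[OF wb c l1]; ((rule oth_helper[of m], simp add: swap_other, use a1 a2 l in \<open>auto simp: swap_at1 swap_at2 swap_other swap_other2\<close>)
          | (use l a1 a2 in \<open>simp add: swap_at1 swap_at2 swap_other swap_other2\<close>)))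
    show "cont P (swap_adj (swap_adj (swap_adj p m) (Suc m)) m) m"
      by (rule cont_shiftL[OF wb c l1]; ((rule oth_helper[of m], simp add: swap_other, use a1 a2 l in \<open>auto simp: swap_at1 swap_at2 swap_other swap_other2\<close>)
          | (use l a1 a2 in \<open>simp add: swap_at1 swap_at2 swap_other swap_other2\<close>)))
    show "cont P (swap_adj (swap_adj p m) (Suc m)) (Suc m)"
      by (rule cont_same[OF wb c]; ((rule oth_helper[of m], simp add: swap_other, use a1 a2 l in \<open>auto simp: swap_at1 swap_at2 swap_other swap_other2\<close>)
          | (use l a1 a2 in \<open>simp add: swap_at1 swap_at2 swap_other swap_other2\<close>)))
  qed
qed



definition nf :: "vpattern set \<Rightarrow> nat list \<Rightarrow> bool" where
  "nf P p \<longleftrightarrow> (\<forall>j. \<not> cont P p j)"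

definition unf :: "vpattern set \<Rightarrow> nat list \<Rightarrow> bool" where
  "unf P p \<longleftrightarrow> (\<forall>q. \<not> rewrite_step P q p)"

definition Dn :: "vpattern set \<Rightarrow> nat list \<Rightarrow> nat list" where
  "Dn P p = (THE s. (rewrite_step P)\<^sup>*\<^sup>* p s \<and> nf P s)"

definition Up :: "vpattern set \<Rightarrow> nat list \<Rightarrow> nat list" where
  "Up P p = (THE s. (rewrite_step P)\<^sup>*\<^sup>* s p \<and> unf P s)"

context
  fixes P :: "vpattern set"
  assumes wb: "well_behaved P"
begin

lemma dstep_facts:
  assumes p: "p \<in> Sn n" and st: "rewrite_step P p q"
  shows "q \<in> Sn n" "inversions q \<subseteq> inversions p" "card (inversions q) < card (inversions p)"
proof -
  obtain j where c: "cont P p j" and q: "q = swap_adj p j" using st rewrite_step_cont by metis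
  have jl: "Suc j < length p" and de: "p ! Suc j < p ! j" using cont_desc[OF wb c] by auto
  have d: "distinct p" using p Sn_def by auto
  note r = inv_swap_desc[OF d jl de]
  show "q \<in> Sn n" using Sn_swap_adj[OF p jl] q by simp
  show "inversions q \<subseteq> inversions p" using r q by auto
  have "inversions q \<subset> inversions p" using r q by auto
  then show "card (inversions q) < card (inversions p)"
    by (simp add: psubset_card_mono finite_inversions)
qed

lemma dstep_back:
  assumes p: "p \<in> Sn n" and st: "rewrite_step P q p"
  shows "q \<in> Sn n"
proof -
  obtain j where c: "cont P q j" and q: "p = swap_adj q j" using st rewrite_step_cont by metis
  have jl: "Suc j < length q" using cont_desc[OF wb c] by auto
  then have e: "q = swap_adj p j" using q swap_adj_swap_adj by simp
  have jl': "Suc j < length p" using jl q by simp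
  have "swap_adj p j \<in> Sn n" by (rule Sn_swap_adj[OF p jl'])
  then show ?thesis using e by simp
qed

lemma rtc_facts:
  assumes "(rewrite_step P)\<^sup>*\<^sup>* p q" and "p \<in> Sn n"
  shows "q \<in> Sn n \<and> inversions q \<subseteq> inversions p"
  using assms by (induction rule: rtranclp_induct) (auto dest: dstep_facts)

lemma rtc_back:
  assumes "(rewrite_step P)\<^sup>*\<^sup>* q p" and "p \<in> Sn n"
  shows "q \<in> Sn n"
  using assms by (induction rule: rtranclp_induct) (auto dest: dstep_back)

lemma up_measure:
  assumes p: "p \<in> Sn n" and st: "rewrite_step P q p"
  shows "card ({1..n} \<times> {1..n} - inversions q) < card ({1..n} \<times> {1..n} - inversions p)"
proof -
  have q: "q \<in> Sn n" using dstep_back[OF p st] .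
  have "inversions p \<subset> inversions q"
    using dstep_facts[OF q st] by auto
  moreover have "inversions q \<subseteq> {1..n} \<times> {1..n}" using inversions_subset[of q] q Sn_def by auto
  ultimately have "{1..n} \<times> {1..n} - inversions q \<subset> {1..n} \<times> {1..n} - inversions p" by blast
  then show ?thesis by (simp add: psubset_card_mono)
qed

lemma lc_down_aux:
  assumes p: "p \<in> Sn n" and cj: "cont P p j" and ck: "cont P p k" and jk: "j \<le> k"
  shows "\<exists>r. (rewrite_step P)\<^sup>*\<^sup>* (swap_adj p j) r \<and> (rewrite_step P)\<^sup>*\<^sup>* (swap_adj p k) r"
proof -
  have jl: "Suc j < length p" and kl: "Suc k < length p" using cont_desc[OF wb cj] cont_desc[OF wb ck] by auto
  consider "j = k" | "Suc j < k" | "k = Suc j" using jk by linarith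
  then show ?thesis
  proof cases
    case 1 then show ?thesis by auto
  next
    case 2
    let ?r = "swap_adj (swap_adj p j) k"
    have "cont P (swap_adj p j) k" using cont_square[OF wb ck jl] 2 by simp
    then have s1: "rewrite_step P (swap_adj p j) ?r" using rewrite_step_cont by blast
    have "cont P (swap_adj p k) j" using cont_square[OF wb cj kl] 2 by simp
    then have "rewrite_step P (swap_adj p k) (swap_adj (swap_adj p k) j)" using rewrite_step_cont by blast
    moreover have "swap_adj (swap_adj p k) j = ?r" using swap_adj_comm[OF jl kl] 2 by simp
    ultimately show ?thesis using s1 by (metis r_into_rtranclp)
  next
    case 3
    have l: "Suc (Suc j) < length p" using kl 3 by simp
    have d1: "p ! Suc j < p ! j" using cont_desc[OF wb cj] by simp
    have d2: "p ! Suc (Suc j) < p ! Suc j" using cont_desc[OF wb ck] 3 by simp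
    note h1 = hexD(1)[OF wb l d1 d2 cj] and h2 = hexD(2)[OF wb l d1 d2 ck[unfolded 3]]
    let ?a = "swap_adj p j" and ?b = "swap_adj p (Suc j)"
    have "(rewrite_step P)\<^sup>*\<^sup>* ?a (swap_adj (swap_adj ?a (Suc j)) j)"
    proof -
      have "rewrite_step P ?a (swap_adj ?a (Suc j))" using h2 rewrite_step_cont by blast
      moreover have "rewrite_step P (swap_adj ?a (Suc j)) (swap_adj (swap_adj ?a (Suc j)) j)"
        using h2 rewrite_step_cont by blast
      ultimately show ?thesis by auto
    qed
    moreover have "(rewrite_step P)\<^sup>*\<^sup>* ?b (swap_adj (swap_adj ?b j) (Suc j))"
    proof -
      have "rewrite_step P ?b (swap_adj ?b j)" using h1 rewrite_step_cont by blast
      moreover have "rewrite_step P (swap_adj ?b j) (swap_adj (swap_adj ?b j) (Suc j))"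
        using h1 rewrite_step_cont by blast
      ultimately show ?thesis by auto
    qed
    moreover have "swap_adj (swap_adj ?b j) (Suc j) = swap_adj (swap_adj ?a (Suc j)) j"
      using swap_adj_braid[OF l] by simp
    ultimately show ?thesis using 3 by metis
  qed
qed

lemma lc_down:
  assumes p: "p \<in> Sn n" and s1: "rewrite_step P p p1" and s2: "rewrite_step P p p2"
  shows "\<exists>r. (rewrite_step P)\<^sup>*\<^sup>* p1 r \<and> (rewrite_step P)\<^sup>*\<^sup>* p2 r"
proof -
  obtain j where cj: "cont P p j" and p1: "p1 = swap_adj p j" using s1 rewrite_step_cont by metis
  obtain k where ck: "cont P p k" and p2: "p2 = swap_adj p k" using s2 rewrite_step_cont by metis
  show ?thesis
  proof (cases "j \<le> k")
    case True then show ?thesis using lc_down_aux[OF p cj ck] p1 p2 by blast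
  next
    case False then show ?thesis using lc_down_aux[OF p ck cj] p1 p2 by fastforce
  qed
qed

lemma lc_up_aux:
  assumes p: "p \<in> Sn n" and jl: "Suc j < length p" and kl: "Suc k < length p"
    and cj: "cont P (swap_adj p j) j" and ck: "cont P (swap_adj p k) k" and jk: "j \<le> k"
  shows "\<exists>r. (rewrite_step P)\<^sup>*\<^sup>* r (swap_adj p j) \<and> (rewrite_step P)\<^sup>*\<^sup>* r (swap_adj p k)"
proof -
  consider "j = k" | "Suc j < k" | "k = Suc j" using jk by linarith
  then show ?thesis
  proof cases
    case 1 then show ?thesis by auto
  next
    case 2
    let ?r = "swap_adj (swap_adj p j) k"
    have e: "swap_adj (swap_adj p k) j = ?r" using swap_adj_comm[OF jl kl] 2 by simp
    have "cont P ?r k" using cont_square[OF wb ck, of j] e jl 2 by simp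
    moreover have "swap_adj ?r k = swap_adj p j" using swap_adj_swap_adj kl by simp
    ultimately have s1: "rewrite_step P ?r (swap_adj p j)" using rewrite_step_cont by metis
    have "cont P ?r j" using cont_square[OF wb cj, of k] jl kl 2 by simp
    moreover have "swap_adj ?r j = swap_adj p k" using e[symmetric] swap_adj_swap_adj jl by simp
    ultimately have "rewrite_step P ?r (swap_adj p k)" using rewrite_step_cont by metis
    then show ?thesis using s1 by (metis r_into_rtranclp)
  next
    case 3
    have l: "Suc (Suc j) < length p" using kl 3 by simp
    have a1: "p ! j < p ! Suc j" using cont_desc[OF wb cj] jl by (simp add: nth_swap_adj)
    have a2: "p ! Suc j < p ! Suc (Suc j)" using cont_desc[OF wb ck] kl 3 by (simp add: nth_swap_adj)
    note h1 = hexU(1)[OF wb l a1 a2 cj] and h2 = hexU(2)[OF wb l a1 a2 ck[unfolded 3]]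
    let ?a = "swap_adj p j" and ?b = "swap_adj p (Suc j)"
    let ?r = "swap_adj (swap_adj ?a (Suc j)) j"
    have e1: "swap_adj ?r j = swap_adj ?a (Suc j)" using swap_adj_swap_adj l by simp
    have e2: "swap_adj (swap_adj ?a (Suc j)) (Suc j) = ?a" using swap_adj_swap_adj l by simp
    have "(rewrite_step P)\<^sup>*\<^sup>* ?r ?a"
    proof -
      have "rewrite_step P ?r (swap_adj ?a (Suc j))" using h2 e1 rewrite_step_cont by metis
      moreover have "rewrite_step P (swap_adj ?a (Suc j)) ?a" using h1 e2 rewrite_step_cont by metis
      ultimately show ?thesis by auto
    qed
    moreover have "(rewrite_step P)\<^sup>*\<^sup>* ?r ?b"
    proof -
      have rr: "?r = swap_adj (swap_adj ?b j) (Suc j)" using swap_adj_braid[OF l] by simp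
      have e3: "swap_adj (swap_adj (swap_adj ?b j) (Suc j)) (Suc j) = swap_adj ?b j" using swap_adj_swap_adj l by simp
      have e4: "swap_adj (swap_adj ?b j) j = ?b" using swap_adj_swap_adj l by simp
      have "rewrite_step P ?r (swap_adj ?b j)" using h1 rr e3 rewrite_step_cont by metis
      moreover have "rewrite_step P (swap_adj ?b j) ?b" using h2 e4 rewrite_step_cont by metis
      ultimately show ?thesis by auto
    qed
    ultimately show ?thesis using 3 by metis
  qed
qed

lemma dstep_into:
  assumes "rewrite_step P q p"
  shows "\<exists>j. Suc j < length p \<and> q = swap_adj p j \<and> cont P (swap_adj p j) j"
proof -
  obtain j where c: "cont P q j" and q: "p = swap_adj q j" using assms rewrite_step_cont by metis
  have jl: "Suc j < length q" using cont_desc[OF wb c] by auto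
  then have "q = swap_adj p j" using q swap_adj_swap_adj by simp
  then show ?thesis using c jl q by auto
qed

lemma lc_up:
  assumes p: "p \<in> Sn n" and s1: "rewrite_step P x1 p" and s2: "rewrite_step P x2 p"
  shows "\<exists>r. (rewrite_step P)\<^sup>*\<^sup>* r x1 \<and> (rewrite_step P)\<^sup>*\<^sup>* r x2"
proof -
  obtain j where j: "Suc j < length p" "x1 = swap_adj p j" "cont P (swap_adj p j) j" using dstep_into[OF s1] by blast
  obtain k where k: "Suc k < length p" "x2 = swap_adj p k" "cont P (swap_adj p k) k" using dstep_into[OF s2] by blast
  show ?thesis
  proof (cases "j \<le> k")
    case True then show ?thesis using lc_up_aux[OF p j(1) k(1) j(3) k(3)] j k by blast
  next
    case False then show ?thesis using lc_up_aux[OF p k(1) j(1) k(3) j(3)] j k by fastforce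
  qed
qed

end



lemma pe_sym: "pattern_equiv P a b \<Longrightarrow> pattern_equiv P b a"
  unfolding pattern_equiv_def
proof (induction rule: rtranclp_induct)
  case base then show ?case by simp
next
  case (step y z)
  have "(\<lambda>p q. rewrite_step P p q \<or> rewrite_step P q p) z y" using step(2) by blast
  from converse_rtranclp_into_rtranclp[OF this step.IH] show ?case .
qed

lemma rtc_last: "r\<^sup>*\<^sup>* a b \<Longrightarrow> a = b \<or> (\<exists>y. r\<^sup>*\<^sup>* a y \<and> r y b)"
  by (induction rule: rtranclp_induct) auto

lemma rtc_pe: "(rewrite_step P)\<^sup>*\<^sup>* a b \<Longrightarrow> pattern_equiv P a b"
  unfolding pattern_equiv_def by (erule rtranclp_mono[THEN predicate2D, rotated]) auto

lemma desc_sub: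
  assumes q: "q \<in> Sn n" and l: "Suc j < length q" and d: "q ! Suc j < q ! j"
  shows "inversions (swap_adj q j) \<subseteq> inversions q" "swap_adj q j \<in> Sn n"
  using inv_swap_desc[OF _ l d] q Sn_swap_adj[OF q l] by (auto simp: Sn_def)

lemma asc_sub:
  assumes q: "q \<in> Sn n" and l: "Suc j < length q" and d: "q ! j < q ! Suc j"
  shows "inversions q \<subseteq> inversions (swap_adj q j)" "swap_adj q j \<in> Sn n"
  using inv_swap_asc[OF _ l d] q Sn_swap_adj[OF q l] by (auto simp: Sn_def)

context
  fixes P :: "vpattern set"
  assumes wb: "well_behaved P"
begin

lemma nf_stop: "nf P x \<Longrightarrow> (rewrite_step P)\<^sup>*\<^sup>* x y \<Longrightarrow> y = x"
  by (erule converse_rtranclpE) (auto simp: nf_def rewrite_step_cont)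

lemma unf_stop: "unf P x \<Longrightarrow> (rewrite_step P)\<^sup>*\<^sup>* y x \<Longrightarrow> y = x"
  by (drule rtc_last) (auto simp: unf_def)

lemma nf_exists: "p \<in> Sn n \<Longrightarrow> \<exists>s. (rewrite_step P)\<^sup>*\<^sup>* p s \<and> nf P s"
proof (induction "card (inversions p)" arbitrary: p rule: less_induct)
  case less
  show ?case
  proof (cases "nf P p")
    case True then show ?thesis by auto
  next
    case False
    then obtain j where "cont P p j" unfolding nf_def by auto
    then have st: "rewrite_step P p (swap_adj p j)" using rewrite_step_cont by blast
    note f = dstep_facts[OF wb less.prems st]
    from less.hyps[OF f(3) f(1)] obtain s where "(rewrite_step P)\<^sup>*\<^sup>* (swap_adj p j) s \<and> nf P s" by blast
    then show ?thesis using st by (meson converse_rtranclp_into_rtranclp)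
  qed
qed

lemma nf_unique: "p \<in> Sn n \<Longrightarrow> (rewrite_step P)\<^sup>*\<^sup>* p s1 \<Longrightarrow> nf P s1 \<Longrightarrow>
    (rewrite_step P)\<^sup>*\<^sup>* p s2 \<Longrightarrow> nf P s2 \<Longrightarrow> s1 = s2"
proof (induction "card (inversions p)" arbitrary: p s1 s2 rule: less_induct)
  case less
  from less.prems(2) show ?case
  proof (cases rule: converse_rtranclpE)
    case base
    then have "nf P p" using less.prems(3) by simp
    then have "s2 = p" using nf_stop less.prems(4) by blast
    then show ?thesis using base by simp
  next
    case (step p1)
    from less.prems(4) show ?thesis
    proof (cases rule: converse_rtranclpE)
      case base
      then show ?thesis using step less.prems(5) by (auto simp: nf_def rewrite_step_cont)
    next
      case step2: (step p2)
      obtain r where r: "(rewrite_step P)\<^sup>*\<^sup>* p1 r" "(rewrite_step P)\<^sup>*\<^sup>* p2 r"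
        using lc_down[OF wb less.prems(1) step(1) step2(1)] by blast
      note f1 = dstep_facts[OF wb less.prems(1) step(1)] and f2 = dstep_facts[OF wb less.prems(1) step2(1)]
      have "r \<in> Sn n" using rtc_facts[OF wb r(1) f1(1)] by blast
      then obtain t where t: "(rewrite_step P)\<^sup>*\<^sup>* r t" "nf P t" using nf_exists by blast
      have "s1 = t" using less.hyps[OF f1(3) f1(1) step(2) less.prems(3)] r(1) t by (meson rtranclp_trans)
      moreover have "s2 = t" using less.hyps[OF f2(3) f2(1) step2(2) less.prems(5)] r(2) t by (meson rtranclp_trans)
      ultimately show ?thesis by simp
    qed
  qed
qed

abbreviation "umeas n p \<equiv> card ({1..n} \<times> {1..n} - inversions p)"

lemma unf_exists: "p \<in> Sn n \<Longrightarrow> \<exists>s. (rewrite_step P)\<^sup>*\<^sup>* s p \<and> unf P s"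
proof (induction "umeas n p" arbitrary: p rule: less_induct)
  case less
  show ?case
  proof (cases "unf P p")
    case True then show ?thesis by auto
  next
    case False
    then obtain q where st: "rewrite_step P q p" unfolding unf_def by auto
    have q: "q \<in> Sn n" using dstep_back[OF wb less.prems st] .
    from less.hyps[OF up_measure[OF wb less.prems st] q] obtain s
      where "(rewrite_step P)\<^sup>*\<^sup>* s q \<and> unf P s" by blast
    then show ?thesis using st by (meson rtranclp.rtrancl_into_rtrancl)
  qed
qed

lemma unf_unique: "p \<in> Sn n \<Longrightarrow> (rewrite_step P)\<^sup>*\<^sup>* s1 p \<Longrightarrow> unf P s1 \<Longrightarrow>
    (rewrite_step P)\<^sup>*\<^sup>* s2 p \<Longrightarrow> unf P s2 \<Longrightarrow> s1 = s2"
proof (induction "umeas n p" arbitrary: p s1 s2 rule: less_induct)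
  case less
  show ?case
  proof (cases "s1 = p")
    case True
    then have "unf P p" using less.prems(3) by simp
    then have "s2 = p" using unf_stop less.prems(4) by blast
    then show ?thesis using True by simp
  next
    case False
    then obtain p1 where step: "(rewrite_step P)\<^sup>*\<^sup>* s1 p1" "rewrite_step P p1 p"
      using rtc_last[OF less.prems(2)] by blast
    show ?thesis
    proof (cases "s2 = p")
      case True
      then show ?thesis using step less.prems(5) by (auto simp: unf_def)
    next
      case False
      then obtain p2 where step2: "(rewrite_step P)\<^sup>*\<^sup>* s2 p2" "rewrite_step P p2 p"
        using rtc_last[OF less.prems(4)] by blast
      obtain r where r: "(rewrite_step P)\<^sup>*\<^sup>* r p1" "(rewrite_step P)\<^sup>*\<^sup>* r p2"
        using lc_up[OF wb less.prems(1) step(2) step2(2)] by blast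
      have q1: "p1 \<in> Sn n" using dstep_back[OF wb less.prems(1) step(2)] .
      have q2: "p2 \<in> Sn n" using dstep_back[OF wb less.prems(1) step2(2)] .
      have "r \<in> Sn n" using rtc_back[OF wb r(1) q1] .
      then obtain t where t: "(rewrite_step P)\<^sup>*\<^sup>* t r" "unf P t" using unf_exists by blast
      have "s1 = t" using less.hyps[OF up_measure[OF wb less.prems(1) step(2)] q1 step(1) less.prems(3)] r(1) t
        by (meson rtranclp_trans)
      moreover have "s2 = t" using less.hyps[OF up_measure[OF wb less.prems(1) step2(2)] q2 step2(1) less.prems(5)] r(2) t
        by (meson rtranclp_trans)
      ultimately show ?thesis by simp
    qed
  qed
qed

lemma Dn_prop: "p \<in> Sn n \<Longrightarrow> (rewrite_step P)\<^sup>*\<^sup>* p (Dn P p) \<and> nf P (Dn P p)"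
proof -
  assume p: "p \<in> Sn n"
  obtain s where s: "(rewrite_step P)\<^sup>*\<^sup>* p s \<and> nf P s" using nf_exists[OF p] by blast
  have "\<exists>!s. (rewrite_step P)\<^sup>*\<^sup>* p s \<and> nf P s"
  proof (rule ex1I[of _ s])
    show "(rewrite_step P)\<^sup>*\<^sup>* p s \<and> nf P s" using s .
    fix y assume "(rewrite_step P)\<^sup>*\<^sup>* p y \<and> nf P y"
    then show "y = s" using nf_unique[OF p] s by blast
  qed
  then show ?thesis unfolding Dn_def by (rule theI')
qed

lemma Dn_eq: "p \<in> Sn n \<Longrightarrow> (rewrite_step P)\<^sup>*\<^sup>* p s \<Longrightarrow> nf P s \<Longrightarrow> Dn P p = s"
proof -
  assume p: "p \<in> Sn n" and a: "(rewrite_step P)\<^sup>*\<^sup>* p s" "nf P s"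
  note d = Dn_prop[OF p]
  show ?thesis using nf_unique[OF p conjunct1[OF d] conjunct2[OF d] a] .
qed

lemma Up_prop: "p \<in> Sn n \<Longrightarrow> (rewrite_step P)\<^sup>*\<^sup>* (Up P p) p \<and> unf P (Up P p)"
proof -
  assume p: "p \<in> Sn n"
  obtain s where s: "(rewrite_step P)\<^sup>*\<^sup>* s p \<and> unf P s" using unf_exists[OF p] by blast
  have "\<exists>!s. (rewrite_step P)\<^sup>*\<^sup>* s p \<and> unf P s"
  proof (rule ex1I[of _ s])
    show "(rewrite_step P)\<^sup>*\<^sup>* s p \<and> unf P s" using s .
    fix y assume "(rewrite_step P)\<^sup>*\<^sup>* y p \<and> unf P y"
    then show "y = s" using unf_unique[OF p] s by blast
  qed
  then show ?thesis unfolding Up_def by (rule theI')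
qed

lemma Up_eq: "p \<in> Sn n \<Longrightarrow> (rewrite_step P)\<^sup>*\<^sup>* s p \<Longrightarrow> unf P s \<Longrightarrow> Up P p = s"
proof -
  assume p: "p \<in> Sn n" and a: "(rewrite_step P)\<^sup>*\<^sup>* s p" "unf P s"
  note d = Up_prop[OF p]
  show ?thesis using unf_unique[OF p conjunct1[OF d] conjunct2[OF d] a] .
qed

lemma Dn_Sn: "p \<in> Sn n \<Longrightarrow> Dn P p \<in> Sn n \<and> inversions (Dn P p) \<subseteq> inversions p"
proof -
  assume p: "p \<in> Sn n"
  show ?thesis using rtc_facts[OF wb conjunct1[OF Dn_prop[OF p]] p] .
qed

lemma Up_Sn: "p \<in> Sn n \<Longrightarrow> Up P p \<in> Sn n \<and> inversions p \<subseteq> inversions (Up P p)"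
proof -
  assume p: "p \<in> Sn n"
  have u: "Up P p \<in> Sn n" using rtc_back[OF wb conjunct1[OF Up_prop[OF p]] p] .
  then show ?thesis using rtc_facts[OF wb conjunct1[OF Up_prop[OF p]] u] by blast
qed

lemma Dn_idem: "p \<in> Sn n \<Longrightarrow> Dn P (Dn P p) = Dn P p"
proof -
  assume p: "p \<in> Sn n"
  have "Dn P p \<in> Sn n" using Dn_Sn[OF p] by blast
  from Dn_eq[OF this rtranclp.rtrancl_refl] show ?thesis using Dn_prop[OF p] by blast
qed

lemma Up_idem: "p \<in> Sn n \<Longrightarrow> Up P (Up P p) = Up P p"
proof -
  assume p: "p \<in> Sn n"
  have "Up P p \<in> Sn n" using Up_Sn[OF p] by blast
  from Up_eq[OF this rtranclp.rtrancl_refl] show ?thesis using Up_prop[OF p] by blast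
qed

lemma equiv_DU:
  assumes "pattern_equiv P p q" and "p \<in> Sn n"
  shows "q \<in> Sn n \<and> Dn P q = Dn P p \<and> Up P q = Up P p"
  using assms unfolding pattern_equiv_def
proof (induction rule: rtranclp_induct)
  case base then show ?case by simp
next
  case (step y z)
  then have y: "y \<in> Sn n" and dy: "Dn P y = Dn P p" and uy: "Up P y = Up P p" by auto
  from step(2) show ?case
  proof
    assume st: "rewrite_step P y z"
    have z: "z \<in> Sn n" using dstep_facts[OF wb y st] by blast
    have "Dn P y = Dn P z"
      using Dn_eq[OF y converse_rtranclp_into_rtranclp[OF st conjunct1[OF Dn_prop[OF z]]] conjunct2[OF Dn_prop[OF z]]] .
    moreover have "Up P z = Up P y"
      using Up_eq[OF z rtranclp.rtrancl_into_rtrancl[OF conjunct1[OF Up_prop[OF y]] st] conjunct2[OF Up_prop[OF y]]] .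
    ultimately show ?thesis using z dy uy by simp
  next
    assume st: "rewrite_step P z y"
    have z: "z \<in> Sn n" using dstep_back[OF wb y st] .
    have "Dn P z = Dn P y"
      using Dn_eq[OF z converse_rtranclp_into_rtranclp[OF st conjunct1[OF Dn_prop[OF y]]] conjunct2[OF Dn_prop[OF y]]] .
    moreover have "Up P y = Up P z"
      using Up_eq[OF y rtranclp.rtrancl_into_rtrancl[OF conjunct1[OF Up_prop[OF z]] st] conjunct2[OF Up_prop[OF z]]] .
    ultimately show ?thesis using z dy uy by simp
  qed
qed

lemma Dn_equiv: "p \<in> Sn n \<Longrightarrow> q \<in> Sn n \<Longrightarrow> Dn P p = Dn P q \<Longrightarrow> pattern_equiv P p q"
proof -
  assume p: "p \<in> Sn n" and q: "q \<in> Sn n" and e: "Dn P p = Dn P q"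
  have 1: "pattern_equiv P p (Dn P p)" using rtc_pe[OF conjunct1[OF Dn_prop[OF p]]] .
  have 2: "pattern_equiv P (Dn P q) q" using pe_sym[OF rtc_pe[OF conjunct1[OF Dn_prop[OF q]]]] .
  show ?thesis using rtranclp_trans[OF 1[unfolded pattern_equiv_def] 2[unfolded pattern_equiv_def e[symmetric]]]
    unfolding pattern_equiv_def .
qed

lemma Up_equiv: "p \<in> Sn n \<Longrightarrow> q \<in> Sn n \<Longrightarrow> Up P p = Up P q \<Longrightarrow> pattern_equiv P p q"
proof -
  assume p: "p \<in> Sn n" and q: "q \<in> Sn n" and e: "Up P p = Up P q"
  have 1: "pattern_equiv P p (Up P p)" using pe_sym[OF rtc_pe[OF conjunct1[OF Up_prop[OF p]]]] .
  have 2: "pattern_equiv P (Up P q) q" using rtc_pe[OF conjunct1[OF Up_prop[OF q]]] .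
  show ?thesis using rtranclp_trans[OF 1[unfolded pattern_equiv_def] 2[unfolded pattern_equiv_def e[symmetric]]]
    unfolding pattern_equiv_def .
qed

end



context
  fixes P :: "vpattern set"
  assumes wb: "well_behaved P"
begin

lemma Dn_step_eq: "y \<in> Sn n \<Longrightarrow> (rewrite_step P)\<^sup>*\<^sup>* y z \<Longrightarrow> Dn P z = Dn P y"
  using equiv_DU[OF wb rtc_pe] by blast

lemma Up_step_eq: "y \<in> Sn n \<Longrightarrow> (rewrite_step P)\<^sup>*\<^sup>* z y \<Longrightarrow> Up P z = Up P y"
proof -
  assume y: "y \<in> Sn n" and r: "(rewrite_step P)\<^sup>*\<^sup>* z y"
  have "pattern_equiv P y z" using pe_sym[OF rtc_pe[OF r]] .
  then show ?thesis using equiv_DU[OF wb _ y] by blast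
qed

lemma Dn_mono:
  "x \<in> Sn n \<Longrightarrow> y \<in> Sn n \<Longrightarrow> inversions x \<subseteq> inversions y \<Longrightarrow>
    inversions (Dn P x) \<subseteq> inversions (Dn P y)"
proof (induction "card (inversions y)" arbitrary: x y rule: less_induct)
  case less
  note x = less.prems(1) and y = less.prems(2) and le = less.prems(3)
  show ?case
  proof (cases "x = y")
    case True then show ?thesis by simp
  next
    case False
    obtain j where j: "Suc j < length y" "y ! Suc j < y ! j" "(y ! j, y ! Suc j) \<notin> inversions x"
      using chain_top[OF x y le False] by blast
    let ?y2 = "swap_adj y j"
    have dy: "distinct y" using y Sn_def by auto
    have I2: "inversions ?y2 = inversions y - {(y ! j, y ! Suc j)}" "(y ! j, y ! Suc j) \<in> inversions y"
      using inv_swap_desc[OF dy j(1) j(2)] by auto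
    have y2: "?y2 \<in> Sn n" using Sn_swap_adj[OF y j(1)] .
    have c2: "card (inversions ?y2) < card (inversions y)"
      unfolding I2(1) by (rule card_Diff1_less[OF finite_inversions I2(2)])
    have le2: "inversions x \<subseteq> inversions ?y2" using le I2 j(3) by auto
    have A: "inversions (Dn P x) \<subseteq> inversions (Dn P ?y2)" using less.hyps[OF c2 x y2 le2] .
    have B: "inversions (Dn P ?y2) \<subseteq> inversions (Dn P y)"
    proof (cases "nf P y")
      case True
      then have "Dn P y = y" using Dn_eq[OF wb y rtranclp.rtrancl_refl] by simp
      moreover have "inversions (Dn P ?y2) \<subseteq> inversions ?y2" using Dn_Sn[OF wb y2] by blast
      ultimately show ?thesis using I2 by auto
    next
      case False
      then obtain k where ck: "cont P y k" unfolding nf_def by auto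
      let ?y' = "swap_adj y k"
      have st: "rewrite_step P y ?y'" using ck rewrite_step_cont by blast
      note f = dstep_facts[OF wb y st]
      have Dy: "Dn P y = Dn P ?y'" using Dn_step_eq[OF y r_into_rtranclp[of "rewrite_step P", OF st]] by simp
      have IH': "inversions (Dn P z) \<subseteq> inversions (Dn P ?y')"
        if "z \<in> Sn n" "inversions z \<subseteq> inversions ?y'" for z
        using less.hyps[OF f(3) that(1) f(1) that(2)] .
      have kl: "Suc k < length y" and dk: "y ! Suc k < y ! k" using cont_desc[OF wb ck] by auto
      consider "k = j" | "Suc k < j \<or> Suc j < k" | "k = Suc j" | "j = Suc k" by linarith
      then show ?thesis
      proof cases
        case 1 then show ?thesis using Dy by simp
      next
        case 2
        let ?z = "swap_adj ?y2 k"
        have "cont P ?y2 k" using cont_square[OF wb ck j(1)] 2 by auto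
        then have st2: "rewrite_step P ?y2 ?z" using rewrite_step_cont by blast
        have Dz: "Dn P ?z = Dn P ?y2" using Dn_step_eq[OF y2 r_into_rtranclp[of "rewrite_step P", OF st2]] .
        have "Suc j < k \<or> Suc k < j" using 2 by blast
        then have ze: "?z = swap_adj ?y' j" using swap_adj_comm[OF j(1) kl] by simp
        have l': "Suc j < length ?y'" using j(1) by simp
        have "?y' ! Suc j < ?y' ! j" using j(2) 2 by (auto simp: swap_other)
        then have "inversions ?z \<subseteq> inversions ?y'" "?z \<in> Sn n" using desc_sub[OF f(1) l'] ze by auto
        then show ?thesis unfolding Dy Dz[symmetric] using IH' by blast
      next
        case 3
        have l: "Suc (Suc j) < length y" using kl 3 by simp
        have d2: "y ! Suc (Suc j) < y ! Suc j" using dk 3 by simp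
        note h = hexD(2)[OF wb l j(2) d2 ck[unfolded 3]]
        let ?w = "swap_adj ?y2 (Suc j)"
        let ?z = "swap_adj ?w j"
        have "rewrite_step P ?y2 ?w" "rewrite_step P ?w ?z" using h rewrite_step_cont by blast+
        then have Dz: "Dn P ?z = Dn P ?y2" using Dn_step_eq[OF y2] by (meson r_into_rtranclp rtranclp_trans)
        have ze: "?z = swap_adj (swap_adj ?y' j) (Suc j)" using swap_adj_braid[OF l] 3 by simp
        have l1: "Suc j < length ?y'" and l2: "Suc (Suc j) < length (swap_adj ?y' j)" using l by auto
        have e1: "?y' ! Suc j < ?y' ! j" using l j(2) d2 3 by (simp add: swap_at1 swap_at2 swap_other)
        note s1 = desc_sub[OF f(1) l1 e1]
        have e2: "swap_adj ?y' j ! Suc (Suc j) < swap_adj ?y' j ! Suc j"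
          using l j(2) d2 3 by (simp add: swap_at1 swap_at2 swap_other swap_other2)
        note s2 = desc_sub[OF s1(2) _ e2]
        have "inversions ?z \<subseteq> inversions ?y'" "?z \<in> Sn n" using s1 s2 l2 ze by auto
        then show ?thesis unfolding Dy Dz[symmetric] using IH' by blast
      next
        case 4
        have l: "Suc (Suc k) < length y" using j(1) 4 by simp
        have d2: "y ! Suc (Suc k) < y ! Suc k" using j(2) 4 by simp
        note h = hexD(1)[OF wb l dk d2 ck]
        let ?w = "swap_adj ?y2 k"
        let ?z = "swap_adj ?w (Suc k)"
        have "rewrite_step P ?y2 ?w" "rewrite_step P ?w ?z" using h 4 rewrite_step_cont by blast+
        then have Dz: "Dn P ?z = Dn P ?y2" using Dn_step_eq[OF y2] by (meson r_into_rtranclp rtranclp_trans)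
        have ze: "?z = swap_adj (swap_adj ?y' (Suc k)) k" using swap_adj_braid[OF l] 4 by simp
        have l1: "Suc (Suc k) < length ?y'" and l2: "Suc k < length (swap_adj ?y' (Suc k))" using l by auto
        have e1: "?y' ! Suc (Suc k) < ?y' ! Suc k" using l dk d2 by (simp add: swap_at1 swap_at2 swap_other swap_other2)
        note s1 = desc_sub[OF f(1) l1 e1]
        have e2: "swap_adj ?y' (Suc k) ! Suc k < swap_adj ?y' (Suc k) ! k"
          using l dk d2 by (simp add: swap_at1 swap_at2 swap_other swap_other2)
        note s2 = desc_sub[OF s1(2) l2 e2]
        have "inversions ?z \<subseteq> inversions ?y'" "?z \<in> Sn n" using s1 s2 ze by auto
        then show ?thesis unfolding Dy Dz[symmetric] using IH' by blast
      qed
    qed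
    show ?thesis using A B by blast
  qed
qed


lemma Up_mono:
  "x \<in> Sn n \<Longrightarrow> y \<in> Sn n \<Longrightarrow> inversions x \<subseteq> inversions y \<Longrightarrow>
    inversions (Up P x) \<subseteq> inversions (Up P y)"
proof (induction "card ({1..n} \<times> {1..n} - inversions x)" arbitrary: x y rule: less_induct)
  case less
  note x = less.prems(1) and y = less.prems(2) and le = less.prems(3)
  show ?case
  proof (cases "x = y")
    case True then show ?thesis by simp
  next
    case False
    obtain j where j: "Suc j < length x" "x ! j < x ! Suc j" "(x ! Suc j, x ! j) \<in> inversions y"
      using chain_bot[OF x y le False] by blast
    let ?x2 = "swap_adj x j"
    have dx: "distinct x" using x Sn_def by auto
    have I2: "inversions ?x2 = insert (x ! Suc j, x ! j) (inversions x)" "(x ! Suc j, x ! j) \<notin> inversions x"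
      using inv_swap_asc[OF dx j(1) j(2)] by auto
    have x2: "?x2 \<in> Sn n" using Sn_swap_adj[OF x j(1)] .
    have inU: "(x ! Suc j, x ! j) \<in> {1..n} \<times> {1..n}" using x j(1) unfolding Sn_def by auto
    have "{1..n} \<times> {1..n} - inversions ?x2 \<subset> {1..n} \<times> {1..n} - inversions x"
      using I2 inU by auto
    then have c2: "card ({1..n} \<times> {1..n} - inversions ?x2) < card ({1..n} \<times> {1..n} - inversions x)"
      by (simp add: psubset_card_mono)
    have le2: "inversions ?x2 \<subseteq> inversions y" using le I2 j(3) by auto
    have A: "inversions (Up P ?x2) \<subseteq> inversions (Up P y)" using less.hyps[OF c2 x2 y le2] .
    have B: "inversions (Up P x) \<subseteq> inversions (Up P ?x2)"
    proof (cases "unf P x")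
      case True
      then have "Up P x = x" using Up_eq[OF wb x rtranclp.rtrancl_refl] by simp
      moreover have "inversions ?x2 \<subseteq> inversions (Up P ?x2)" using Up_Sn[OF wb x2] by blast
      ultimately show ?thesis using I2 by auto
    next
      case False
      then obtain q where st: "rewrite_step P q x" unfolding unf_def by auto
      obtain k where k: "Suc k < length x" "q = swap_adj x k" and ck: "cont P (swap_adj x k) k"
        using dstep_into[OF wb st] by blast
      let ?x' = "swap_adj x k"
      have st': "rewrite_step P ?x' x" using st k by simp
      have x': "?x' \<in> Sn n" using dstep_back[OF wb x st'] .
      have Ux: "Up P ?x' = Up P x" using Up_step_eq[OF x r_into_rtranclp[of "rewrite_step P", OF st']] .
      have IH': "inversions (Up P ?x') \<subseteq> inversions (Up P z)"
        if "z \<in> Sn n" "inversions ?x' \<subseteq> inversions z" for z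
        using less.hyps[OF up_measure[OF wb x st'] x' that(1) that(2)] .
      have ak: "x ! k < x ! Suc k" using cont_desc[OF wb ck] k(1) by (simp add: swap_at1 swap_at2)
      consider "k = j" | "Suc k < j \<or> Suc j < k" | "j = Suc k" | "k = Suc j" by linarith
      then show ?thesis
      proof cases
        case 1 then show ?thesis using Ux by simp
      next
        case 2
        let ?z = "swap_adj ?x2 k"
        have "Suc j < k \<or> Suc k < j" using 2 by blast
        then have ze: "?z = swap_adj ?x' j" using swap_adj_comm[OF j(1) k(1)] by simp
        have "cont P ?z k" using cont_square[OF wb ck, of j] ze j(1) 2 by auto
        moreover have "swap_adj ?z k = ?x2" using swap_adj_swap_adj k(1) by simp
        ultimately have st2: "rewrite_step P ?z ?x2" using rewrite_step_cont by metis
        have Uz: "Up P ?z = Up P ?x2" using Up_step_eq[OF x2 r_into_rtranclp[of "rewrite_step P", OF st2]] .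
        have l': "Suc j < length ?x'" using j(1) by simp
        have "?x' ! j < ?x' ! Suc j" using j(2) 2 by (auto simp: swap_other)
        then have "inversions ?x' \<subseteq> inversions ?z" "?z \<in> Sn n" using asc_sub[OF x' l'] ze by auto
        then have "inversions (Up P ?x') \<subseteq> inversions (Up P ?z)" using IH' by blast
        then show ?thesis unfolding Ux[symmetric] Uz .
      next
        case 3
        have l: "Suc (Suc k) < length x" using j(1) 3 by simp
        have a2: "x ! Suc k < x ! Suc (Suc k)" using j(2) 3 by simp
        note h = hexU(1)[OF wb l ak a2 ck]
        let ?w = "swap_adj ?x2 k"
        let ?z = "swap_adj ?w (Suc k)"
        have "cont P ?w k" "cont P ?z (Suc k)" using h 3 by auto
        moreover have "swap_adj ?w k = ?x2" "swap_adj ?z (Suc k) = ?w" using swap_adj_swap_adj l by auto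
        ultimately have "rewrite_step P ?w ?x2" "rewrite_step P ?z ?w" using rewrite_step_cont by metis+
        then have Uz: "Up P ?z = Up P ?x2" using Up_step_eq[OF x2] by (meson r_into_rtranclp rtranclp_trans)
        have ze: "?z = swap_adj (swap_adj ?x' (Suc k)) k" using swap_adj_braid[OF l] 3 by simp
        have l1: "Suc (Suc k) < length ?x'" and l2: "Suc k < length (swap_adj ?x' (Suc k))" using l by auto
        have e1: "?x' ! Suc k < ?x' ! Suc (Suc k)" using l ak a2 by (simp add: swap_at1 swap_at2 swap_other swap_other2)
        note s1 = asc_sub[OF x' l1 e1]
        have e2: "swap_adj ?x' (Suc k) ! k < swap_adj ?x' (Suc k) ! Suc k"
          using l ak a2 by (simp add: swap_at1 swap_at2 swap_other swap_other2)
        note s2 = asc_sub[OF s1(2) l2 e2]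
        have "inversions ?x' \<subseteq> inversions ?z" "?z \<in> Sn n" using s1 s2 ze by auto
        then have "inversions (Up P ?x') \<subseteq> inversions (Up P ?z)" using IH' by blast
        then show ?thesis unfolding Ux[symmetric] Uz .
      next
        case 4
        have l: "Suc (Suc j) < length x" using k(1) 4 by simp
        have a2: "x ! Suc j < x ! Suc (Suc j)" using ak 4 by simp
        note h = hexU(2)[OF wb l j(2) a2 ck[unfolded 4]]
        let ?w = "swap_adj ?x2 (Suc j)"
        let ?z = "swap_adj ?w j"
        have "cont P ?w (Suc j)" "cont P ?z j" using h by auto
        moreover have "swap_adj ?w (Suc j) = ?x2" "swap_adj ?z j = ?w" using swap_adj_swap_adj l by auto
        ultimately have "rewrite_step P ?w ?x2" "rewrite_step P ?z ?w" using rewrite_step_cont by metis+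
        then have Uz: "Up P ?z = Up P ?x2" using Up_step_eq[OF x2] by (meson r_into_rtranclp rtranclp_trans)
        have ze: "?z = swap_adj (swap_adj ?x' j) (Suc j)" using swap_adj_braid[OF l] 4 by simp
        have l1: "Suc j < length ?x'" and l2: "Suc (Suc j) < length (swap_adj ?x' j)" using l by auto
        have e1: "?x' ! j < ?x' ! Suc j" using l j(2) a2 4 by (simp add: swap_at1 swap_at2 swap_other swap_other2)
        note s1 = asc_sub[OF x' l1 e1]
        have e2: "swap_adj ?x' j ! Suc j < swap_adj ?x' j ! Suc (Suc j)"
          using l j(2) a2 4 by (simp add: swap_at1 swap_at2 swap_other swap_other2)
        note s2 = asc_sub[OF s1(2) l2 e2]
        have "inversions ?x' \<subseteq> inversions ?z" "?z \<in> Sn n" using s1 s2 ze by auto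
        then have "inversions (Up P ?x') \<subseteq> inversions (Up P ?z)" using IH' by blast
        then show ?thesis unfolding Ux[symmetric] Uz .
      qed
    qed
    show ?thesis using A B by blast
  qed
qed

end



lemma avoid_nf: "(\<forall>tp\<in>P. avoids s tp) \<longleftrightarrow> nf P s"
  unfolding avoids_def contains_def nf_def cont_def by blast

theorem mainTheorem20:
  fixes P :: "vpattern set" and n :: nat
  assumes "well_behaved P" and "n \<ge> 1"
  shows "lattice_congruence n (pattern_equiv P) \<and>
         (\<forall>p\<in>Sn n. \<exists>!s. s \<in> Sn n \<and> pattern_equiv P s p \<and> (\<forall>tp\<in>P. avoids s tp)) \<and>
         (\<forall>s\<in>Sn n. (\<forall>tp\<in>P. avoids s tp) \<longrightarrow>
            (\<forall>q\<in>Sn n. pattern_equiv P q s \<longrightarrow> weak_le s q))"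
proof (intro conjI)
  note wb = assms(1)
  show "lattice_congruence n (pattern_equiv P)"
    unfolding lattice_congruence_def
  proof (intro conjI)
    show "\<forall>x\<in>Sn n. pattern_equiv P x x" unfolding pattern_equiv_def by simp
    show "\<forall>x\<in>Sn n. \<forall>y\<in>Sn n. pattern_equiv P x y \<longrightarrow> pattern_equiv P y x" using pe_sym by blast
    show "\<forall>x\<in>Sn n. \<forall>y\<in>Sn n. \<forall>z\<in>Sn n. pattern_equiv P x y \<and> pattern_equiv P y z \<longrightarrow> pattern_equiv P x z"
      unfolding pattern_equiv_def by (meson rtranclp_trans)
    show "\<forall>x\<in>Sn n. \<forall>y\<in>Sn n. \<forall>z\<in>Sn n. \<forall>j1 j2. pattern_equiv P x y \<and> is_join n j1 x z \<and> is_join n j2 y z \<longrightarrow>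
        pattern_equiv P j1 j2"
    proof (intro ballI allI impI)
      fix x y z j1 j2
      assume x: "x \<in> Sn n" and y: "y \<in> Sn n" and z: "z \<in> Sn n"
        and h: "pattern_equiv P x y \<and> is_join n j1 x z \<and> is_join n j2 y z"
      have j1: "j1 \<in> Sn n" and j2: "j2 \<in> Sn n" using h unfolding is_join_def by auto
      have Uxy: "Up P y = Up P x" using equiv_DU[OF wb _ x] h by blast
      have xj1: "inversions x \<subseteq> inversions j1" and zj1: "inversions z \<subseteq> inversions j1"
        and yj2: "inversions y \<subseteq> inversions j2" and zj2: "inversions z \<subseteq> inversions j2"
        using h unfolding is_join_def weak_le_def by auto
      have U1: "Up P j1 \<in> Sn n" "inversions j1 \<subseteq> inversions (Up P j1)" using Up_Sn[OF wb j1] by auto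
      have U2: "Up P j2 \<in> Sn n" "inversions j2 \<subseteq> inversions (Up P j2)" using Up_Sn[OF wb j2] by auto
      have "inversions y \<subseteq> inversions (Up P j1)"
      proof -
        have "inversions y \<subseteq> inversions (Up P y)" using Up_Sn[OF wb y] by blast
        also have "\<dots> = inversions (Up P x)" using Uxy by simp
        also have "\<dots> \<subseteq> inversions (Up P j1)" using Up_mono[OF wb x j1 xj1] .
        finally show ?thesis .
      qed
      moreover have "inversions z \<subseteq> inversions (Up P j1)" using zj1 U1 by blast
      ultimately have a: "inversions j2 \<subseteq> inversions (Up P j1)"
        using h U1(1) unfolding is_join_def weak_le_def by blast
      have "inversions x \<subseteq> inversions (Up P j2)"
      proof -
        have "inversions x \<subseteq> inversions (Up P x)" using Up_Sn[OF wb x] by blast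
        also have "\<dots> = inversions (Up P y)" using Uxy by simp
        also have "\<dots> \<subseteq> inversions (Up P j2)" using Up_mono[OF wb y j2 yj2] .
        finally show ?thesis .
      qed
      moreover have "inversions z \<subseteq> inversions (Up P j2)" using zj2 U2 by blast
      ultimately have b: "inversions j1 \<subseteq> inversions (Up P j2)"
        using h U2(1) unfolding is_join_def weak_le_def by blast
      have "inversions (Up P j2) \<subseteq> inversions (Up P j1)"
        using Up_mono[OF wb j2 U1(1) a] Up_idem[OF wb j1] by simp
      moreover have "inversions (Up P j1) \<subseteq> inversions (Up P j2)"
        using Up_mono[OF wb j1 U2(1) b] Up_idem[OF wb j2] by simp
      ultimately have "Up P j1 = Up P j2" using inv_determines[OF U1(1) U2(1)] by blast
      then show "pattern_equiv P j1 j2" using Up_equiv[OF wb j1 j2] by blast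
    qed
    show "\<forall>x\<in>Sn n. \<forall>y\<in>Sn n. \<forall>z\<in>Sn n. \<forall>m1 m2. pattern_equiv P x y \<and> is_meet n m1 x z \<and> is_meet n m2 y z \<longrightarrow>
        pattern_equiv P m1 m2"
    proof (intro ballI allI impI)
      fix x y z m1 m2
      assume x: "x \<in> Sn n" and y: "y \<in> Sn n" and z: "z \<in> Sn n"
        and h: "pattern_equiv P x y \<and> is_meet n m1 x z \<and> is_meet n m2 y z"
      have m1: "m1 \<in> Sn n" and m2: "m2 \<in> Sn n" using h unfolding is_meet_def by auto
      have Dxy: "Dn P y = Dn P x" using equiv_DU[OF wb _ x] h by blast
      have m1x: "inversions m1 \<subseteq> inversions x" and m1z: "inversions m1 \<subseteq> inversions z"
        and m2y: "inversions m2 \<subseteq> inversions y" and m2z: "inversions m2 \<subseteq> inversions z"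
        using h unfolding is_meet_def weak_le_def by auto
      have D1: "Dn P m1 \<in> Sn n" "inversions (Dn P m1) \<subseteq> inversions m1" using Dn_Sn[OF wb m1] by auto
      have D2: "Dn P m2 \<in> Sn n" "inversions (Dn P m2) \<subseteq> inversions m2" using Dn_Sn[OF wb m2] by auto
      have "inversions (Dn P m1) \<subseteq> inversions y"
      proof -
        have "inversions (Dn P m1) \<subseteq> inversions (Dn P x)" using Dn_mono[OF wb m1 x m1x] .
        also have "\<dots> = inversions (Dn P y)" using Dxy by simp
        also have "\<dots> \<subseteq> inversions y" using Dn_Sn[OF wb y] by blast
        finally show ?thesis .
      qed
      moreover have "inversions (Dn P m1) \<subseteq> inversions z" using m1z D1 by blast
      ultimately have a: "inversions (Dn P m1) \<subseteq> inversions m2"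
        using h D1(1) unfolding is_meet_def weak_le_def by blast
      have "inversions (Dn P m2) \<subseteq> inversions x"
      proof -
        have "inversions (Dn P m2) \<subseteq> inversions (Dn P y)" using Dn_mono[OF wb m2 y m2y] .
        also have "\<dots> = inversions (Dn P x)" using Dxy by simp
        also have "\<dots> \<subseteq> inversions x" using Dn_Sn[OF wb x] by blast
        finally show ?thesis .
      qed
      moreover have "inversions (Dn P m2) \<subseteq> inversions z" using m2z D2 by blast
      ultimately have b: "inversions (Dn P m2) \<subseteq> inversions m1"
        using h D2(1) unfolding is_meet_def weak_le_def by blast
      have "inversions (Dn P m1) \<subseteq> inversions (Dn P m2)"
        using Dn_mono[OF wb D1(1) m2 a] Dn_idem[OF wb m1] by simp
      moreover have "inversions (Dn P m2) \<subseteq> inversions (Dn P m1)"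
        using Dn_mono[OF wb D2(1) m1 b] Dn_idem[OF wb m2] by simp
      ultimately have "Dn P m1 = Dn P m2" using inv_determines[OF D1(1) D2(1)] by blast
      then show "pattern_equiv P m1 m2" using Dn_equiv[OF wb m1 m2] by blast
    qed
  qed
  show "\<forall>p\<in>Sn n. \<exists>!s. s \<in> Sn n \<and> pattern_equiv P s p \<and> (\<forall>tp\<in>P. avoids s tp)"
  proof
    fix p assume p: "p \<in> Sn n"
    show "\<exists>!s. s \<in> Sn n \<and> pattern_equiv P s p \<and> (\<forall>tp\<in>P. avoids s tp)"
    proof (rule ex1I[of _ "Dn P p"])
      show "Dn P p \<in> Sn n \<and> pattern_equiv P (Dn P p) p \<and> (\<forall>tp\<in>P. avoids (Dn P p) tp)"
        using Dn_Sn[OF wb p] pe_sym[OF rtc_pe[OF conjunct1[OF Dn_prop[OF wb p]]]]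
          conjunct2[OF Dn_prop[OF wb p]] avoid_nf by blast
    next
      fix s assume s: "s \<in> Sn n \<and> pattern_equiv P s p \<and> (\<forall>tp\<in>P. avoids s tp)"
      have "Dn P s = s" using Dn_eq[OF wb _ rtranclp.rtrancl_refl] s avoid_nf by blast
      moreover have "Dn P s = Dn P p" using equiv_DU[OF wb pe_sym p] s by metis
      ultimately show "s = Dn P p" by simp
    qed
  qed
  show "\<forall>s\<in>Sn n. (\<forall>tp\<in>P. avoids s tp) \<longrightarrow> (\<forall>q\<in>Sn n. pattern_equiv P q s \<longrightarrow> weak_le s q)"
  proof (intro ballI impI)
    fix s q assume s: "s \<in> Sn n" and av: "\<forall>tp\<in>P. avoids s tp" and q: "q \<in> Sn n"
      and e: "pattern_equiv P q s"
    have "Dn P s = s" using Dn_eq[OF wb s rtranclp.rtrancl_refl] av avoid_nf by blast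
    moreover have "Dn P s = Dn P q" using equiv_DU[OF wb e q] by blast
    moreover have "inversions (Dn P q) \<subseteq> inversions q" using Dn_Sn[OF wb q] by blast
    ultimately show "weak_le s q" unfolding weak_le_def by simp
  qed
qed


end
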